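(* There is a polynomial-time reduction from 3-Coloring to Fall 3-Coloring. That is, there is a polynomial-time algorithm that, given a graph $G$, constructs a graph $G'$ such that $G$ has a proper vertex $3$-coloring if and only if $G'$ has a fall $3$-coloring.
   Context: All graphs are finite and undirected. 3-Coloring is the problem of deciding whether a given graph admits a proper vertex coloring with $3$ colors. For a graph $G=(V,E)$ and a partition $\Pi=\{V_1,\dots,V_k\}$ of $V$, a vertex $v\in V_i$ is colorful if $v$ is adjacent to at least one vertex of each class $V_j$ with $j\neq i$. $\Pi$ is a fall $k$-coloring if every $V_i$ is an independent set and every vertex is colorful; equivalently, $V$ is partitioned into $k$ independent dominating sets. Fall $k$-Coloring is the problem of deciding whether a given graph admits a fall $k$-coloring. *)

theory Defs
  imports Main "HOL-Library.Disjoint_Sets"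
begin

definition graph :: "'a set \<Rightarrow> ('a \<Rightarrow> 'a \<Rightarrow> bool) \<Rightarrow> bool" where
  "graph V E \<longleftrightarrow> finite V \<and> (\<forall>u v. E u v \<longrightarrow> u \<in> V \<and> v \<in> V)
     \<and> (\<forall>u v. E u v \<longrightarrow> E v u) \<and> (\<forall>v. \<not> E v v)"

definition proper_coloring :: "'a set \<Rightarrow> ('a \<Rightarrow> 'a \<Rightarrow> bool) \<Rightarrow> nat \<Rightarrow> ('a \<Rightarrow> nat) \<Rightarrow> bool" where
  "proper_coloring V E k c \<longleftrightarrow> (\<forall>v\<in>V. c v < k) \<and> (\<forall>u\<in>V. \<forall>v\<in>V. E u v \<longrightarrow> c u \<noteq> c v)"

definition colorable :: "'a set \<Rightarrow> ('a \<Rightarrow> 'a \<Rightarrow> bool) \<Rightarrow> nat \<Rightarrow> bool" where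
  "colorable V E k \<longleftrightarrow> (\<exists>c. proper_coloring V E k c)"

definition independent :: "('a \<Rightarrow> 'a \<Rightarrow> bool) \<Rightarrow> 'a set \<Rightarrow> bool" where
  "independent E A \<longleftrightarrow> (\<forall>u\<in>A. \<forall>v\<in>A. \<not> E u v)"

definition colorful :: "('a \<Rightarrow> 'a \<Rightarrow> bool) \<Rightarrow> 'a set set \<Rightarrow> 'a set \<Rightarrow> 'a \<Rightarrow> bool" where
  "colorful E P A v \<longleftrightarrow> (\<forall>B\<in>P. B \<noteq> A \<longrightarrow> (\<exists>u\<in>B. E v u))"

definition fall_coloring :: "'a set \<Rightarrow> ('a \<Rightarrow> 'a \<Rightarrow> bool) \<Rightarrow> nat \<Rightarrow> 'a set set \<Rightarrow> bool" where
  "fall_coloring V E k P \<longleftrightarrow> partition_on V P \<and> finite P \<and> card P = k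
     \<and> (\<forall>A\<in>P. independent E A) \<and> (\<forall>A\<in>P. \<forall>v\<in>A. colorful E P A v)"

definition fall_colorable :: "'a set \<Rightarrow> ('a \<Rightarrow> 'a \<Rightarrow> bool) \<Rightarrow> nat \<Rightarrow> bool" where
  "fall_colorable V E k \<longleftrightarrow> (\<exists>P. fall_coloring V E k P)"

definition enc :: "nat \<Rightarrow> (nat \<Rightarrow> nat \<Rightarrow> bool) \<Rightarrow> bool list" where
  "enc n E = concat (map (\<lambda>i. map (\<lambda>j. E i j) [0..<n]) [0..<n])"

datatype move = MoveL | MoveR | Stay

text \<open>A machine: number of states Q (states 0..<Q, start state 0, halting state 1),
  number of tape symbols S (symbols 0..<S; 0 = blank, 1 = bit False, 2 = bit True),
  and a transition function.\<close>
type_synonym tm = "nat \<times> nat \<times> (nat \<Rightarrow> nat \<Rightarrow> nat \<times> nat \<times> move)"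

definition tm_wf :: "tm \<Rightarrow> bool" where
  "tm_wf M = (case M of (Q, S, \<delta>) \<Rightarrow> 2 \<le> Q \<and> 3 \<le> S \<and>
     (\<forall>q<Q. \<forall>a<S. fst (\<delta> q a) < Q \<and> fst (snd (\<delta> q a)) < S))"

type_synonym config = "nat \<times> (int \<Rightarrow> nat) \<times> int"

definition mv :: "move \<Rightarrow> int" where
  "mv m = (case m of MoveL \<Rightarrow> -1 | MoveR \<Rightarrow> 1 | Stay \<Rightarrow> 0)"

definition tm_step :: "tm \<Rightarrow> config \<Rightarrow> config" where
  "tm_step M c = (case M of (Q, S, \<delta>) \<Rightarrow> (case c of (q, tape, pos) \<Rightarrow>
     if q = 1 then c else
       (case \<delta> q (tape pos) of (q', a', m) \<Rightarrow> (q', tape(pos := a'), pos + mv m))))"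

definition tm_run :: "tm \<Rightarrow> nat \<Rightarrow> config \<Rightarrow> config" where
  "tm_run M t c = (tm_step M ^^ t) c"

definition bitsym :: "bool \<Rightarrow> nat" where
  "bitsym b = (if b then 2 else 1)"

definition tm_init :: "bool list \<Rightarrow> config" where
  "tm_init w = (0, (\<lambda>i. if 0 \<le> i \<and> i < int (length w) then bitsym (w ! nat i) else 0), 0)"

definition tm_computes_in :: "tm \<Rightarrow> bool list \<Rightarrow> bool list \<Rightarrow> nat \<Rightarrow> bool" where
  "tm_computes_in M w w' t = (case tm_run M t (tm_init w) of (q, tape, pos) \<Rightarrow>
     q = 1 \<and> (\<forall>i<length w'. tape (int i) = bitsym (w' ! i)) \<and> tape (int (length w')) = 0)"

end

theory Submission
  imports Defs
begin


datatype pa = A0 | A1 | A2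
datatype tg = TChk | TCons bool | TV bool | TPass bool pa | TAdv bool
datatype st = Start | Halt | P1a | P1b | P1c bool | GH tg | Chk | Cons bool | Find bool
  | ExtGo | V bool | Pass bool pa bool | FindW bool bool | OutGo bool pa bool bool
  | Out2 bool pa bool bool | Out3 bool pa bool bool | Adv bool | K nat

definition an :: "pa \<Rightarrow> nat" where "an a = (case a of A0 \<Rightarrow> 0 | A1 \<Rightarrow> 1 | A2 \<Rightarrow> 2)"
definition ob :: "bool \<Rightarrow> nat" where "ob b = (if b then 1 else 0)"

fun tgn :: "tg \<Rightarrow> nat" where
  "tgn TChk = 0" | "tgn (TCons p) = 1 + ob p" | "tgn (TV p) = 3 + ob p"
| "tgn (TAdv p) = 5 + ob p" | "tgn (TPass p a) = 7 + 2 * an a + ob p"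

fun sn :: "st \<Rightarrow> nat" where
  "sn Start = 0" | "sn Halt = 1" | "sn P1a = 2" | "sn P1b = 3" | "sn (P1c b) = 4 + ob b"
| "sn Chk = 6" | "sn ExtGo = 7" | "sn (Cons p) = 8 + ob p" | "sn (Find p) = 10 + ob p"
| "sn (V p) = 12 + ob p" | "sn (Adv p) = 14 + ob p" | "sn (GH t) = 16 + tgn t"
| "sn (Pass p a s) = 32 + 4 * an a + 2 * ob p + ob s"
| "sn (FindW p d) = 44 + 2 * ob p + ob d"
| "sn (OutGo p a d x) = 48 + 8 * an a + 4 * ob p + 2 * ob d + ob x"
| "sn (Out2 p a d x) = 72 + 8 * an a + 4 * ob p + 2 * ob d + ob x"
| "sn (Out3 p a d x) = 96 + 8 * an a + 4 * ob p + 2 * ob d + ob x"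
| "sn (K i) = 120 + i"

lemma tgn_le: "tgn t \<le> 12"
  by (cases t) (auto simp: ob_def an_def split: pa.splits)

lemma tgn_inj: "tgn t = tgn u \<Longrightarrow> t = u"
  by (cases t; cases u) (auto simp: ob_def an_def split: pa.splits if_splits)

lemma sn_inj: "inj sn"
proof (rule injI)
  fix x y assume "sn x = sn y"
  then show "x = y"
    using tgn_le[of "case x of GH t \<Rightarrow> t | _ \<Rightarrow> TChk"] tgn_le[of "case y of GH t \<Rightarrow> t | _ \<Rightarrow> TChk"]
    by (cases x; cases y) (auto simp: ob_def an_def split: pa.splits if_splits dest: tgn_inj)
qed


definition wsym :: "bool \<Rightarrow> nat \<Rightarrow> nat" where "wsym b s = 4 + 2 * s + ob b"
definition rsym :: "bool \<Rightarrow> bool \<Rightarrow> nat" where "rsym p q = 10 + 2 * ob p + ob q"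
definition isW :: "nat \<Rightarrow> bool" where "isW c \<longleftrightarrow> 4 \<le> c \<and> c \<le> 9"
definition isR :: "nat \<Rightarrow> bool" where "isR c \<longleftrightarrow> 10 \<le> c \<and> c \<le> 13"

definition kl :: "bool list" where "kl = [False,True,True,True,False,True,True,True,False]"

definition b0 :: "pa \<Rightarrow> bool \<Rightarrow> bool \<Rightarrow> bool" where
  "b0 a d x = (case a of A0 \<Rightarrow> x | A1 \<Rightarrow> d | A2 \<Rightarrow> d)"
definition b1 :: "pa \<Rightarrow> bool \<Rightarrow> bool \<Rightarrow> bool" where
  "b1 a d x = (case a of A0 \<Rightarrow> d | A1 \<Rightarrow> False | A2 \<Rightarrow> d)"
definition b2 :: "pa \<Rightarrow> bool \<Rightarrow> bool \<Rightarrow> bool" where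
  "b2 a d x = (case a of A0 \<Rightarrow> d | A1 \<Rightarrow> d | A2 \<Rightarrow> False)"

fun tgt :: "tg \<Rightarrow> st" where
  "tgt TChk = Chk" | "tgt (TCons p) = Cons p" | "tgt (TV p) = V p"
| "tgt (TPass p a) = Pass p a False" | "tgt (TAdv p) = Adv p"

fun nxt :: "pa \<Rightarrow> bool \<Rightarrow> tg" where
  "nxt A0 p = TPass p A1" | "nxt A1 p = TPass p A2" | "nxt A2 p = TAdv p"

fun dlt :: "st \<Rightarrow> nat \<Rightarrow> st \<times> nat \<times> move" where
  "dlt Start c = (if c = 1 \<or> c = 2 then (P1a, c, Stay) else (K 1, bitsym False, MoveR))"
| "dlt (K i) c = (if i < 8 then K (Suc i) else Halt, bitsym (kl ! i), MoveR)"
| "dlt Halt c = (Halt, c, Stay)"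
| "dlt P1a c = (if c = 1 \<or> c = 2 \<or> isW c then (P1a, c, MoveR) else (P1b, c, MoveL))"
| "dlt P1b c = (if c = 1 \<or> c = 2 then (P1c (c = 2), 3, MoveL) else (GH TChk, c, Stay))"
| "dlt (P1c b) c = (if c = 0 then (P1a, wsym b 0, Stay) else (P1c b, c, MoveL))"
| "dlt (GH t) c = (if c = 0 then (tgt t, c, MoveR) else (GH t, c, MoveL))"
| "dlt Chk c = (if isR c \<or> c = 6 \<or> c = 7 then (Chk, c, MoveR)
     else if c = 4 \<or> c = 5 then (GH (TCons False), c, Stay) else (GH (TV False), c, Stay))"
| "dlt (Cons p) c = (if c = rsym (\<not> p) False then (Cons p, c, MoveR)
     else if c = rsym p False then (Find p, rsym (\<not> p) False, MoveR)
     else (if p then GH TChk else ExtGo, c, Stay))"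
| "dlt (Find p) c = (if c = 4 \<or> c = 5 then (GH (TCons p), c + 2, Stay) else (Find p, c, MoveR))"
| "dlt ExtGo c = (if c = 0 then (GH (TCons True), rsym True False, Stay) else (ExtGo, c, MoveL))"
| "dlt (V p) c = (if c = rsym p True then (V p, c, MoveR)
     else if c = rsym p False then (GH (TPass p A0), c, Stay) else (Halt, c, Stay))"
| "dlt (Pass p a s) c = (if c = rsym (\<not> p) True \<or> c = rsym (\<not> p) False
        then (Pass p a (s \<or> c = rsym (\<not> p) False), c, MoveR)
     else if c = rsym p True \<or> c = rsym p False
        then (if a = A0 then FindW p (c = rsym p False \<and> \<not> s) else OutGo p a (c = rsym p False \<and> \<not> s) False,
              rsym (\<not> p) (c = rsym p True), MoveR)
     else (GH (nxt a (\<not> p)), c, Stay))"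
| "dlt (FindW p d) c = (if c = 6 \<or> c = 7 then (OutGo p A0 d (c = 7), c + 2, MoveR) else (FindW p d, c, MoveR))"
| "dlt (OutGo p a d x) c = (if c = 1 \<or> c = 2 \<or> isW c \<or> isR c then (OutGo p a d x, c, MoveR)
     else (Out2 p a d x, bitsym (b0 a d x), MoveR))"
| "dlt (Out2 p a d x) c = (Out3 p a d x, bitsym (b1 a d x), MoveR)"
| "dlt (Out3 p a d x) c = (GH (TPass p a), bitsym (b2 a d x), Stay)"
| "dlt (Adv p) c = (if c = rsym p True then (Adv p, c, MoveR) else (GH (TV p), rsym p True, Stay))"

definition dl :: "nat \<Rightarrow> nat \<Rightarrow> nat \<times> nat \<times> move" where
  "dl q c = (if q \<in> range sn then (case dlt (inv sn q) c of (s', b, m) \<Rightarrow> (sn s', b, m)) else (1, c, Stay))"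

definition Mch :: tm where "Mch = (130, 14, dl)"

lemma dl_sn: "dl (sn s) c = (case dlt s c of (s', b, m) \<Rightarrow> (sn s', b, m))"
  by (simp add: dl_def inv_f_f[OF sn_inj])

lemma sn_tgt: "sn (tgt t) < 130"
  by (cases t) (auto simp: ob_def an_def split: pa.splits)

lemma sn_bound: "sn s < 130 \<Longrightarrow> sn (fst (dlt s c)) < 130"
  using sn_tgt
  apply (cases s)
  apply (auto simp: ob_def an_def split: pa.splits if_splits)
  done

lemma sym_bound: "c < 14 \<Longrightarrow> fst (snd (dlt s c)) < 14"
  by (cases s) (auto simp: ob_def bitsym_def wsym_def rsym_def)

lemma wf_Mch: "tm_wf Mch"
  unfolding tm_wf_def Mch_def
proof (simp, intro allI impI)
  fix q a :: nat assume q: "q < 130" and a: "a < 14"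
  show "fst (dl q a) < 130 \<and> fst (snd (dl q a)) < 14"
  proof (cases "q \<in> range sn")
    case True
    then obtain s where s: "q = sn s" by auto
    show ?thesis using sn_bound[of s a] sym_bound[of a s] q a unfolding s dl_sn
      by (auto split: prod.splits)
  next
    case False then show ?thesis using a by (simp add: dl_def)
  qed
qed



definition reach :: "config \<Rightarrow> config \<Rightarrow> nat \<Rightarrow> bool" where
  "reach c c' B \<longleftrightarrow> (\<exists>t\<le>B. tm_run Mch t c = c')"

lemma run_add: "tm_run Mch (a + b) c = tm_run Mch b (tm_run Mch a c)"
  by (simp add: tm_run_def funpow_add add.commute[of a b])

lemma reach_trans: "reach c1 c2 B1 \<Longrightarrow> reach c2 c3 B2 \<Longrightarrow> reach c1 c3 (B1 + B2)"
  unfolding reach_def by (metis add_le_mono run_add)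

lemma reach_trans2: "reach c1 c2 B1 \<Longrightarrow> reach c2' c3 B2 \<Longrightarrow> c2 = c2' \<Longrightarrow> reach c1 c3 (B1 + B2)"
  using reach_trans by blast

lemma reach_cong: "reach c1 c2 B \<Longrightarrow> c1 = c1' \<Longrightarrow> c2 = c2' \<Longrightarrow> B \<le> B' \<Longrightarrow> reach c1' c2' B'"
  unfolding reach_def using order.trans by blast

lemma reach_mono: "reach c c' B \<Longrightarrow> B \<le> B' \<Longrightarrow> reach c c' B'"
  unfolding reach_def using order.trans by blast

lemma reach_refl: "reach c c 0"
  unfolding reach_def tm_run_def by auto

lemma reach_eq: "reach c c' B \<Longrightarrow> c' = c'' \<Longrightarrow> B \<le> B' \<Longrightarrow> reach c c'' B'"
  using reach_mono by blast

lemma step1: "s \<noteq> Halt \<Longrightarrow> tape pos = c \<Longrightarrow> dlt s c = (s', b, m) \<Longrightarrow>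
  tm_run Mch 1 (sn s, tape, pos) = (sn s', tape(pos := b), pos + mv m)"
proof -
  assume a: "s \<noteq> Halt" "tape pos = c" "dlt s c = (s', b, m)"
  have "sn s \<noteq> 1" using a(1) inj_eq[OF sn_inj, of s Halt] by simp
  then show ?thesis using a by (simp add: tm_run_def tm_step_def Mch_def dl_sn)
qed

lemma step: "s \<noteq> Halt \<Longrightarrow> tape pos = c \<Longrightarrow> dlt s c = (s', b, m) \<Longrightarrow>
  reach (sn s, tape, pos) (sn s', tape(pos := b), pos + mv m) 1"
  unfolding reach_def using step1 by blast

lemma halted: "tm_run Mch t (1, tape, pos) = (1, tape, pos)"
proof (induction t)
  case 0 then show ?case by (simp add: tm_run_def)
next
  case (Suc t)
  have "tm_run Mch (Suc t) (1, tape, pos) = tm_run Mch t (tm_run Mch 1 (1, tape, pos))"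
    using run_add[of 1 t] by simp
  also have "tm_run Mch 1 (1, tape, pos) = (1, tape, pos)"
    by (simp add: tm_run_def tm_step_def Mch_def)
  finally show ?case using Suc by simp
qed

definition tp :: "int \<Rightarrow> nat list \<Rightarrow> int \<Rightarrow> nat" where
  "tp lo xs i = (if lo \<le> i \<and> i < lo + int (length xs) then xs ! nat (i - lo) else 0)"

lemma tp_at: "xs = as @ b # bs \<Longrightarrow> tp lo xs (lo + int (length as)) = b"
  by (simp add: tp_def nth_append)

lemma tp_upd: "xs = as @ b # bs \<Longrightarrow> (tp lo xs)(lo + int (length as) := b') = tp lo (as @ b' # bs)"
  by (rule ext) (auto simp: tp_def nth_append nth_Cons' nat_diff_distrib)

lemma tp_at'[simp]: "tp lo (as @ b # bs) (lo + int (length as)) = b"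
  by (simp add: tp_def nth_append)

lemma tp_left: "tp lo xs (lo - 1) = 0"
  by (simp add: tp_def)

lemma tp_right: "tp lo xs (lo + int (length xs)) = 0"
  by (simp add: tp_def)

lemma tp_prepend: "(tp lo xs)(lo - 1 := a) = tp (lo - 1) (a # xs)"
proof (rule ext)
  fix i
  show "((tp lo xs)(lo - 1 := a)) i = tp (lo - 1) (a # xs) i"
  proof (cases "i = lo - 1")
    case True then show ?thesis by (simp add: tp_def)
  next
    case False
    then have "lo \<le> i \<Longrightarrow> nat (i - (lo - 1)) = Suc (nat (i - lo))" by auto
    then show ?thesis using False by (auto simp: tp_def)
  qed
qed

lemma tp_append: "(tp lo xs)(lo + int (length xs) := a) = tp lo (xs @ [a])"
  by (rule ext) (auto simp: tp_def nth_append)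

lemma mv_simps[simp]: "mv MoveR = 1" "mv MoveL = -1" "mv Stay = 0"
  by (auto simp: mv_def)

lemma scan_right_gen:
  assumes "xs = as @ ys @ bs" "\<forall>s c. c \<in> set ys \<longrightarrow> dlt (P s) c = (P (g s c), c, MoveR)"
    "\<forall>s. P s \<noteq> Halt"
  shows "reach (sn (P s), tp lo xs, lo + int (length as))
           (sn (P (fold (\<lambda>c s. g s c) ys s)), tp lo xs, lo + int (length as) + int (length ys)) (length ys)"
  using assms
proof (induction ys arbitrary: as s)
  case Nil then show ?case by (simp add: reach_refl)
next
  case (Cons y ys)
  have y: "tp lo xs (lo + int (length as)) = y" using Cons.prems(1) by simp
  have 1: "reach (sn (P s), tp lo xs, lo + int (length as)) (sn (P (g s y)), tp lo xs, lo + int (length as) + 1) 1"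
    using step[of "P s" "tp lo xs" "lo + int (length as)" y "P (g s y)" y MoveR, OF _ y] Cons.prems(2,3) y
    by (simp add: fun_upd_idem)
  have 2: "reach (sn (P (g s y)), tp lo xs, lo + int (length (as @ [y])))
           (sn (P (fold (\<lambda>c s. g s c) ys (g s y))), tp lo xs, lo + int (length (as @ [y])) + int (length ys)) (length ys)"
    using Cons.IH[of "as @ [y]" "g s y"] Cons.prems by auto
  show ?case by (rule reach_eq[OF reach_trans2[OF 1 2]]) (auto simp: algebra_simps)
qed

lemma scan_right:
  assumes "xs = as @ ys @ bs" "\<forall>c\<in>set ys. dlt s c = (s, c, MoveR)" "s \<noteq> Halt"
  shows "reach (sn s, tp lo xs, lo + int (length as)) (sn s, tp lo xs, lo + int (length as) + int (length ys)) (length ys)"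
  using scan_right_gen[of xs as ys bs "\<lambda>_. s" "\<lambda>s c. s" s lo] assms by simp

lemma scan_left:
  assumes "xs = as @ ys @ bs" "\<forall>c\<in>set ys. dlt s c = (s, c, MoveL)" "s \<noteq> Halt"
  shows "reach (sn s, tp lo xs, lo + int (length as) + int (length ys) - 1) (sn s, tp lo xs, lo + int (length as) - 1) (length ys)"
  using assms
proof (induction ys arbitrary: as)
  case Nil then show ?case by (simp add: reach_refl)
next
  case (Cons y ys)
  have 2: "reach (sn s, tp lo xs, lo + int (length (as @ [y])) + int (length ys) - 1)
           (sn s, tp lo xs, lo + int (length (as @ [y])) - 1) (length ys)"
    using Cons.IH[of "as @ [y]"] Cons.prems by auto
  have y: "tp lo xs (lo + int (length as)) = y" using Cons.prems(1) by simp
  have 1: "reach (sn s, tp lo xs, lo + int (length as)) (sn s, tp lo xs, lo + int (length as) - 1) 1"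
    using step[of s "tp lo xs" "lo + int (length as)" y s y MoveL, OF _ y] Cons.prems(2,3) y
    by (simp add: fun_upd_idem)
  show ?case by (rule reach_cong[OF reach_trans2[OF 2 1]]) (auto simp: algebra_simps)
qed

lemma go_home:
  assumes "0 \<notin> set xs" "j \<le> length xs"
  shows "reach (sn (GH t), tp lo xs, lo + int j - 1) (sn (tgt t), tp lo xs, lo) (j + 1)"
proof -
  have 1: "reach (sn (GH t), tp lo xs, lo + int j - 1) (sn (GH t), tp lo xs, lo - 1) j"
  proof -
    have l: "length (take j xs) = j" using assms by simp
    have "\<forall>c\<in>set (take j xs). dlt (GH t) c = (GH t, c, MoveL)"
      using assms(1) by (metis dlt.simps(7) in_set_takeD)
    from scan_left[of xs "[]" "take j xs" "drop j xs" "GH t" lo, OF _ this]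
    show ?thesis unfolding l by simp
  qed
  have 2: "reach (sn (GH t), tp lo xs, lo - 1) (sn (tgt t), tp lo xs, lo) 1"
    using step[of "GH t" "tp lo xs" "lo - 1" 0 "tgt t" 0 MoveR] by (simp add: tp_left fun_upd_idem)
  show ?thesis using reach_trans[OF 1 2] by simp
qed



declare sn.simps[simp del]

lemma sn_Halt: "sn Halt = 1" by (simp add: sn.simps)

lemma step_any: "s \<noteq> Halt \<Longrightarrow> dlt s (tape pos) = (s', b, m) \<Longrightarrow>
  reach (sn s, tape, pos) (sn s', tape(pos := b), pos + mv m) 1"
  using step by blast

lemma step_same: "s \<noteq> Halt \<Longrightarrow> dlt s (tape pos) = (s', tape pos, m) \<Longrightarrow>
  reach (sn s, tape, pos) (sn s', tape, pos + mv m) 1"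
  using step[of s tape pos "tape pos" s' "tape pos" m] by simp

definition wfr :: "bool \<Rightarrow> nat" where "wfr b = wsym b 0"

lemma bitsym_ne[simp]: "bitsym b \<noteq> 0" "bitsym b = Suc 0 \<longleftrightarrow> \<not> b" "bitsym b \<noteq> 3"
  "bitsym False = Suc 0" "bitsym True = 2"
  "(bitsym b = 2) = b" "\<not> isW (bitsym b)" "\<not> isR (bitsym b)"
  by (auto simp: bitsym_def isW_def isR_def)

lemma wsym_props[simp]: "wsym b s \<noteq> 0" "wsym b s \<noteq> Suc 0" "wsym b s \<noteq> 2" "wsym b s \<noteq> 3" "s < 3 \<Longrightarrow> isW (wsym b s)"
  "s < 3 \<Longrightarrow> \<not> isR (wsym b s)"
  by (auto simp: wsym_def isW_def isR_def ob_def)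

lemma rsym_props[simp]: "rsym p q \<noteq> 0" "rsym p q \<noteq> Suc 0" "rsym p q \<noteq> 2" "rsym p q \<noteq> 3" "isR (rsym p q)"
  "\<not> isW (rsym p q)" "rsym p q \<noteq> 4" "rsym p q \<noteq> 5" "rsym p q \<noteq> 6" "rsym p q \<noteq> 7" "rsym p q \<noteq> 8" "rsym p q \<noteq> 9" "rsym p q = rsym p' q' \<longleftrightarrow> p = p' \<and> q = q'"
  by (auto simp: rsym_def isW_def isR_def ob_def)

lemma pos_syms[simp]: "0 < bitsym b" "0 < wsym b s" "0 < rsym p q"
  by (auto simp: bitsym_def wsym_def rsym_def)

lemma isRW_small[simp]: "\<not> isR 0" "\<not> isR 3" "\<not> isW 0" "\<not> isW 3" "\<not> isR (Suc 0)" "\<not> isR 2" "\<not> isW (Suc 0)" "\<not> isW 2"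
  by (auto simp: isR_def isW_def)

definition p1l :: "bool list \<Rightarrow> bool list \<Rightarrow> nat list" where
  "p1l ys zs = map wfr zs @ map bitsym ys @ replicate (length zs) 3"

lemma p1_trip:
  "reach (sn P1a, tp (- int (length zs)) (p1l (ys @ [b]) zs), - int (length zs))
         (sn P1a, tp (- int (Suc (length zs))) (p1l ys (b # zs)), - int (Suc (length zs)))
         (2 * (length ys + 1 + length zs) + 2)"
proof -
  define lo where "lo = - int (length zs)"
  define xs where "xs = p1l (ys @ [b]) zs"
  have 1: "reach (sn P1a, tp lo xs, lo + int (length ([]::nat list)))
     (sn P1a, tp lo xs, lo + int (length ([]::nat list)) + int (length (map wfr zs @ map bitsym (ys @ [b]))))
     (length (map wfr zs @ map bitsym (ys @ [b])))"
    by (rule scan_right) (auto simp: xs_def p1l_def wfr_def)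
  have c: "tp lo xs (lo + int (length zs + length ys + 1)) = 0 \<or> tp lo xs (lo + int (length zs + length ys + 1)) = 3"
    by (cases zs) (auto simp: tp_def xs_def p1l_def nth_append)
  have 2: "reach (sn P1a, tp lo xs, lo + int (length zs + length ys + 1))
        (sn P1b, tp lo xs, lo + int (length zs + length ys + 1) - 1) 1"
    using step_same[of P1a "tp lo xs" "lo + int (length zs + length ys + 1)" P1b MoveL] c
    by (auto simp: isW_def)
  have xs2: "xs = (map wfr zs @ map bitsym ys) @ bitsym b # replicate (length zs) 3"
    by (simp add: xs_def p1l_def)
  have 3: "reach (sn P1b, tp lo xs, lo + int (length (map wfr zs @ map bitsym ys)))
      (sn (P1c b), tp lo ((map wfr zs @ map bitsym ys) @ 3 # replicate (length zs) 3),
         lo + int (length (map wfr zs @ map bitsym ys)) - 1) 1"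
    using step[of P1b "tp lo xs" "lo + int (length (map wfr zs @ map bitsym ys))" "bitsym b" "P1c b" 3 MoveL]
    unfolding tp_upd[OF xs2] using tp_at[OF xs2] by auto
  define xs3 where "xs3 = (map wfr zs @ map bitsym ys) @ 3 # replicate (length zs) 3"
  have 4: "reach (sn (P1c b), tp lo xs3, lo + int (length ([]::nat list)) + int (length (map wfr zs @ map bitsym ys)) - 1)
    (sn (P1c b), tp lo xs3, lo + int (length ([]::nat list)) - 1) (length (map wfr zs @ map bitsym ys))"
    by (rule scan_left) (auto simp: xs3_def wfr_def)
  have 5: "reach (sn (P1c b), tp lo xs3, lo - 1) (sn P1a, tp (lo - 1) (wsym b 0 # xs3), lo - 1) 1"
    using step[of "P1c b" "tp lo xs3" "lo - 1" 0 P1a "wsym b 0" Stay] by (simp add: tp_left tp_prepend)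
  have e: "wsym b 0 # xs3 = p1l ys (b # zs)" by (simp add: xs3_def p1l_def wfr_def)
  have lo1: "lo - 1 = - int (Suc (length zs))" by (simp add: lo_def)
  show ?thesis
    apply (rule reach_cong[OF reach_trans2[OF reach_trans2[OF reach_trans2[OF reach_trans2[OF 1 2] 3] 4] 5]])
    unfolding xs_def[symmetric] lo_def[symmetric] xs3_def[symmetric] e[symmetric] lo1[symmetric]
    by (auto simp: algebra_simps)
qed


lemma p1_loop:
  "reach (sn P1a, tp (- int (length zs)) (p1l ys zs), - int (length zs))
         (sn P1a, tp (- int (length ys + length zs)) (p1l [] (ys @ zs)), - int (length ys + length zs))
         (length ys * (2 * (length ys + length zs) + 2))"
proof (induction ys arbitrary: zs rule: rev_induct)
  case Nil then show ?case by (simp add: reach_refl)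
next
  case (snoc b ys)
  have 2: "reach (sn P1a, tp (- int (length (b # zs))) (p1l ys (b # zs)), - int (length (b # zs)))
         (sn P1a, tp (- int (length ys + length (b # zs))) (p1l [] (ys @ (b # zs))), - int (length ys + length (b # zs)))
         (length ys * (2 * (length ys + length (b # zs)) + 2))" by (rule snoc.IH)
  show ?case
    by (rule reach_cong[OF reach_trans2[OF p1_trip 2]]) (auto simp: algebra_simps)
qed

definition Lx :: "bool list \<Rightarrow> int" where "Lx x = int (length x)"

lemma p1_end:
  assumes "x \<noteq> []"
  shows "reach (sn P1a, tp (- int (length x)) (p1l [] x), - int (length x))
               (sn Chk, tp (- int (length x)) (map wfr x @ replicate (length x) 3), - int (length x))
               (2 * length x + 3)"
proof -
  define lo where "lo = - int (length x)"
  define xs where "xs = map wfr x @ replicate (length x) 3"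
  have xs: "p1l [] x = xs" by (simp add: p1l_def xs_def)
  have 1: "reach (sn P1a, tp lo xs, lo + int (length ([]::nat list)))
     (sn P1a, tp lo xs, lo + int (length ([]::nat list)) + int (length (map wfr x))) (length (map wfr x))"
    by (rule scan_right) (auto simp: xs_def wfr_def)
  have c0: "tp lo xs 0 = 3" using assms
    by (auto simp: tp_def xs_def lo_def nth_append)
  have 2: "reach (sn P1a, tp lo xs, 0) (sn P1b, tp lo xs, - 1) 1"
    using step_same[of P1a "tp lo xs" 0 P1b MoveL] c0 by (auto simp: isW_def)
  obtain x' b where xb: "x = x' @ [b]" using assms by (metis rev_exhaust)
  have c1: "tp lo xs (-1) = wfr b"
    using tp_at'[of lo "map wfr x'" "wfr b" "replicate (length x) 3"]
    by (simp add: xs_def lo_def xb)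
  have 3: "reach (sn P1b, tp lo xs, - 1) (sn (GH TChk), tp lo xs, - 1) 1"
    using step_same[of P1b "tp lo xs" "-1" "GH TChk" Stay] c1 by (auto simp: wfr_def)
  have 4: "reach (sn (GH TChk), tp lo xs, lo + int (length x) - 1) (sn (tgt TChk), tp lo xs, lo) (length x + 1)"
    by (rule go_home) (auto simp: xs_def wfr_def)
  show ?thesis
    apply (rule reach_cong[OF reach_trans2[OF reach_trans2[OF reach_trans2[OF 1 2] 3] 4]])
    unfolding xs lo_def[symmetric] by (auto simp: lo_def xs_def)
qed


lemma start_step:
  assumes "x \<noteq> []"
  shows "reach (tm_init x) (sn P1a, tp 0 (map bitsym x), 0) 1"
proof -
  have "(\<lambda>i. if 0 \<le> i \<and> i < int (length x) then bitsym (x ! nat i) else 0) = tp 0 (map bitsym x)"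
    by (rule ext) (auto simp: tp_def nat_less_iff)
  then have ti: "tm_init x = (sn Start, tp 0 (map bitsym x), 0)"
    by (simp add: tm_init_def sn.simps)
  obtain b x' where xb: "x = b # x'" using assms by (cases x) auto
  have "tp 0 (map bitsym x) 0 = bitsym b" using tp_at'[of 0 "[]" "bitsym b" "map bitsym x'"] by (simp add: xb)
  then show ?thesis unfolding ti
    using step_same[of Start "tp 0 (map bitsym x)" 0 P1a Stay] by (auto simp: bitsym_def)
qed

lemma p1_all:
  assumes "x \<noteq> []"
  shows "reach (tm_init x) (sn Chk, tp (- int (length x)) (map wfr x @ replicate (length x) 3), - int (length x))
     (1 + length x * (2 * length x + 2) + (2 * length x + 3))"
proof -
  have a: "p1l x [] = map bitsym x" by (simp add: p1l_def)
  show ?thesis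
  using reach_trans[OF reach_trans[OF start_step[OF assms] p1_loop[of "[]" x, unfolded a, simplified]] p1_end[OF assms]]
  by simp
qed



lemma tp_at_P: "xs = as @ ys \<Longrightarrow> ys \<noteq> [] \<Longrightarrow> \<forall>c\<in>set ys. P c \<Longrightarrow> P (tp lo xs (lo + int (length as)))"
  by (cases ys) auto

lemma ext_go:
  assumes "0 \<notin> set xs" "j \<le> length xs"
  shows "reach (sn ExtGo, tp lo xs, lo + int j - 1) (sn (Cons True), tp (lo - 1) (rsym True False # xs), lo - 1) (j + 3)"
proof -
  have l: "length (take j xs) = j" using assms by simp
  have "\<forall>c\<in>set (take j xs). dlt ExtGo c = (ExtGo, c, MoveL)"
    using assms(1) by (metis dlt.simps(11) in_set_takeD)
  from scan_left[of xs "[]" "take j xs" "drop j xs" ExtGo lo, OF _ this]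
  have 1: "reach (sn ExtGo, tp lo xs, lo + int j - 1) (sn ExtGo, tp lo xs, lo - 1) j"
    unfolding l by simp
  have 2: "reach (sn ExtGo, tp lo xs, lo - 1) (sn (GH (TCons True)), tp (lo - 1) (rsym True False # xs), lo - 1) 1"
    using step[of ExtGo "tp lo xs" "lo - 1" 0 "GH (TCons True)" "rsym True False" Stay]
    by (simp add: tp_left tp_prepend)
  have 3: "reach (sn (GH (TCons True)), tp (lo - 1) (rsym True False # xs), (lo - 1) + int 1 - 1)
      (sn (tgt (TCons True)), tp (lo - 1) (rsym True False # xs), lo - 1) (1 + 1)"
    by (rule go_home) (use assms in auto)
  show ?thesis
    by (rule reach_cong[OF reach_trans2[OF reach_trans2[OF 1 2] 3]]) auto
qed

context
  fixes x :: "bool list"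
begin

definition w1 :: "bool \<Rightarrow> nat" where "w1 b = wsym b 1"

definition p2l :: "nat \<Rightarrow> nat \<Rightarrow> bool \<Rightarrow> nat \<Rightarrow> nat list" where
  "p2l f r p m = replicate f (rsym (\<not> p) False) @ replicate (r - f) (rsym p False)
     @ map w1 (take m x) @ map wfr (drop m x) @ replicate (length x) 3"

lemma p2l_nz: "0 \<notin> set (p2l f r p m)"
  by (auto simp: p2l_def w1_def wfr_def dest: in_set_takeD in_set_dropD)

lemma p2l_len: "length (p2l f r p m) = max f r + 2 * length x"
  by (auto simp: p2l_def)

lemma cons_trip:
  assumes "f < r" "m < length x"
  shows "reach (sn (Cons p), tp lo (p2l f r p m), lo) (sn (Cons p), tp lo (p2l (Suc f) r p (Suc m)), lo)
     (2 * r + 2 * m + 3)"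
proof -
  define xs where "xs = p2l f r p m"
  define R2 where "R2 = replicate (r - Suc f) (rsym p False)"
  define E where "E = replicate (length x) (3::nat)"
  have rr: "replicate (r - f) (rsym p False) = rsym p False # R2"
  proof -
    have "r - f = Suc (r - Suc f)" using assms by simp
    then show ?thesis by (simp add: R2_def)
  qed
  have xm: "drop m x = x ! m # drop (Suc m) x" using assms by (simp add: Cons_nth_drop_Suc)
  have tk: "take (Suc m) x = take m x @ [x ! m]" using assms by (simp add: take_Suc_conv_app_nth)
  have 1: "reach (sn (Cons p), tp lo xs, lo + int (length ([]::nat list)))
     (sn (Cons p), tp lo xs, lo + int (length ([]::nat list)) + int (length (replicate f (rsym (\<not> p) False)))) (length (replicate f (rsym (\<not> p) False)))"
    by (rule scan_right) (auto simp: xs_def p2l_def)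
  have xs1: "xs = replicate f (rsym (\<not> p) False) @ rsym p False # (R2 @ map w1 (take m x) @ map wfr (drop m x) @ E)"
    by (simp add: xs_def p2l_def rr E_def)
  define xs2 where "xs2 = replicate f (rsym (\<not> p) False) @ rsym (\<not> p) False # (R2 @ map w1 (take m x) @ map wfr (drop m x) @ E)"
  have 2: "reach (sn (Cons p), tp lo xs, lo + int (length (replicate f (rsym (\<not> p) False))))
     (sn (Find p), tp lo xs2, lo + int (length (replicate f (rsym (\<not> p) False))) + 1) 1"
    using step[of "Cons p" "tp lo xs" "lo + int (length (replicate f (rsym (\<not> p) False)))" "rsym p False" "Find p" "rsym (\<not> p) False" MoveR]
    unfolding tp_upd[OF xs1] xs2_def using tp_at[OF xs1] by auto
  have 3: "reach (sn (Find p), tp lo xs2, lo + int (length (replicate (Suc f) (rsym (\<not> p) False))))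
     (sn (Find p), tp lo xs2, lo + int (length (replicate (Suc f) (rsym (\<not> p) False))) + int (length (R2 @ map w1 (take m x))))
     (length (R2 @ map w1 (take m x)))"
    by (rule scan_right[where bs = "map wfr (drop m x) @ E"]) (auto simp: xs2_def R2_def w1_def wsym_def ob_def replicate_app_Cons_same dest: in_set_takeD)
  have xs2': "xs2 = (replicate (Suc f) (rsym (\<not> p) False) @ R2 @ map w1 (take m x)) @ wfr (x ! m) # (map wfr (drop (Suc m) x) @ E)"
    by (simp add: xs2_def xm replicate_append_same[symmetric])
  define xs3 where "xs3 = (replicate (Suc f) (rsym (\<not> p) False) @ R2 @ map w1 (take m x)) @ w1 (x ! m) # (map wfr (drop (Suc m) x) @ E)"
  have 4: "reach (sn (Find p), tp lo xs2, lo + int (length (replicate (Suc f) (rsym (\<not> p) False) @ R2 @ map w1 (take m x))))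
     (sn (GH (TCons p)), tp lo xs3, lo + int (length (replicate (Suc f) (rsym (\<not> p) False) @ R2 @ map w1 (take m x)))) 1"
    using step[of "Find p" "tp lo xs2" "lo + int (length (replicate (Suc f) (rsym (\<not> p) False) @ R2 @ map w1 (take m x)))" "wfr (x ! m)" "GH (TCons p)" "w1 (x ! m)" Stay]
    unfolding tp_upd[OF xs2'] xs3_def using tp_at[OF xs2'] by (auto simp: wfr_def w1_def wsym_def ob_def)
  have xs3': "xs3 = p2l (Suc f) r p (Suc m)"
    using assms by (simp add: xs3_def p2l_def tk R2_def E_def)
  have l3: "length (replicate (Suc f) (rsym (\<not> p) False) @ R2 @ map w1 (take m x)) = r + m"
    using assms by (simp add: R2_def)
  have 5: "reach (sn (GH (TCons p)), tp lo xs3, lo + int (Suc (r + m)) - 1) (sn (tgt (TCons p)), tp lo xs3, lo) (Suc (r + m) + 1)"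
    by (rule go_home) (use assms in \<open>auto simp: xs3' p2l_nz p2l_len\<close>)
  show ?thesis
    apply (rule reach_cong[OF reach_trans2[OF reach_trans2[OF reach_trans2[OF reach_trans2[OF 1 2] 3] 4] 5]])
    using assms unfolding l3 xs3' xs_def by (auto simp: R2_def)
qed

lemma cons_loop:
  "f \<le> r \<Longrightarrow> m + (r - f) \<le> length x \<Longrightarrow>
   reach (sn (Cons p), tp lo (p2l f r p m), lo) (sn (Cons p), tp lo (p2l r r p (m + (r - f))), lo)
     ((r - f) * (2 * r + 2 * length x + 3))"
proof (induction "r - f" arbitrary: f m)
  case 0 then show ?case by (simp add: reach_refl)
next
  case (Suc d)
  have 1: "reach (sn (Cons p), tp lo (p2l f r p m), lo) (sn (Cons p), tp lo (p2l (Suc f) r p (Suc m)), lo)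
     (2 * r + 2 * m + 3)" by (rule cons_trip) (use Suc in auto)
  have 2: "reach (sn (Cons p), tp lo (p2l (Suc f) r p (Suc m)), lo) (sn (Cons p), tp lo (p2l r r p (Suc m + (r - Suc f))), lo)
     ((r - Suc f) * (2 * r + 2 * length x + 3))" by (rule Suc.hyps) (use Suc in auto)
  have e: "r - f = Suc (r - Suc f)" using Suc by simp
  have b: "2 * r + 2 * m + 3 + (r - Suc f) * (2 * r + 2 * length x + 3) \<le> (r - f) * (2 * r + 2 * length x + 3)"
    unfolding e using Suc by simp
  show ?case
    by (rule reach_cong[OF reach_trans2[OF 1 2]]) (use Suc b e in simp_all)
qed

lemma cons_exit:
  assumes "x \<noteq> []"
  shows "reach (sn (Cons p), tp lo (p2l r r p m), lo) (sn (if p then GH TChk else ExtGo), tp lo (p2l r r p m), lo + int r) (r + 1)"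
proof -
  define xs where "xs = p2l r r p m"
  define rest where "rest = map w1 (take m x) @ map wfr (drop m x) @ replicate (length x) (3::nat)"
  have xs: "xs = replicate r (rsym (\<not> p) False) @ rest" by (simp add: xs_def rest_def p2l_def)
  have 1: "reach (sn (Cons p), tp lo xs, lo + int (length ([]::nat list)))
     (sn (Cons p), tp lo xs, lo + int (length ([]::nat list)) + int (length (replicate r (rsym (\<not> p) False)))) (length (replicate r (rsym (\<not> p) False)))"
    by (rule scan_right) (auto simp: xs)
  have c: "\<not> isR (tp lo xs (lo + int (length (replicate r (rsym (\<not> p) False)))))"
    by (rule tp_at_P[OF xs]) (use assms in \<open>auto simp: rest_def w1_def wfr_def dest: in_set_takeD in_set_dropD\<close>)
  have 2: "reach (sn (Cons p), tp lo xs, lo + int r) (sn (if p then GH TChk else ExtGo), tp lo xs, lo + int r) 1"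
    apply (rule reach_cong[OF step_same[of "Cons p" "tp lo xs" "lo + int r" "if p then GH TChk else ExtGo" Stay]])
    using c by (auto simp: sn.simps)
  show ?thesis using reach_trans2[OF 1 2] by (simp add: xs_def)
qed

lemma chk_trip:
  assumes "k * k < length x"
  shows "reach (sn Chk, tp lo (p2l 0 k False (k * k)), lo) (sn (Cons False), tp lo (p2l 0 k False (k * k)), lo)
     (2 * (k + k * k) + 3)"
proof -
  define xs where "xs = p2l 0 k False (k * k)"
  have xs: "xs = [] @ (replicate k (rsym False False) @ map w1 (take (k * k) x)) @ (map wfr (drop (k * k) x) @ replicate (length x) 3)"
    by (simp add: xs_def p2l_def)
  have 1: "reach (sn Chk, tp lo xs, lo + int (length ([]::nat list)))
     (sn Chk, tp lo xs, lo + int (length ([]::nat list)) + int (length (replicate k (rsym False False) @ map w1 (take (k * k) x))))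
     (length (replicate k (rsym False False) @ map w1 (take (k * k) x)))"
    by (rule scan_right[OF xs]) (auto simp: w1_def wsym_def ob_def dest: in_set_takeD)
  have xm: "drop (k * k) x = x ! (k * k) # drop (Suc (k * k)) x" using assms by (simp add: Cons_nth_drop_Suc)
  have xs': "xs = (replicate k (rsym False False) @ map w1 (take (k * k) x)) @ wfr (x ! (k * k)) # (map wfr (drop (Suc (k * k)) x) @ replicate (length x) 3)"
    by (simp add: xs_def p2l_def xm)
  have l: "length (replicate k (rsym False False) @ map w1 (take (k * k) x)) = k + k * k" using assms by simp
  have 2: "reach (sn Chk, tp lo xs, lo + int (k + k * k)) (sn (GH (TCons False)), tp lo xs, lo + int (k + k * k)) 1"
    using step_same[of Chk "tp lo xs" "lo + int (k + k * k)" "GH (TCons False)" Stay] tp_at[OF xs'] unfolding l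
    by (auto simp: wfr_def wsym_def ob_def isR_def)
  have 3: "reach (sn (GH (TCons False)), tp lo xs, lo + int (Suc (k + k * k)) - 1) (sn (tgt (TCons False)), tp lo xs, lo) (Suc (k + k * k) + 1)"
    by (rule go_home) (use assms in \<open>auto simp: xs_def p2l_nz p2l_len\<close>)
  show ?thesis
    using assms by (intro reach_cong[OF reach_trans2[OF reach_trans2[OF 1 2] 3]]) (auto simp: l xs_def min_def)
qed

lemma chk_end:
  assumes "k * k = length x" "x \<noteq> []"
  shows "reach (sn Chk, tp lo (p2l 0 k False (k * k)), lo) (sn (V False), tp lo (p2l 0 k False (k * k)), lo)
     (2 * (k + k * k) + 3)"
proof -
  define xs where "xs = p2l 0 k False (k * k)"
  have xs: "xs = [] @ (replicate k (rsym False False) @ map w1 x) @ (replicate (length x) 3)"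
    using assms by (simp add: xs_def p2l_def)
  have 1: "reach (sn Chk, tp lo xs, lo + int (length ([]::nat list)))
     (sn Chk, tp lo xs, lo + int (length ([]::nat list)) + int (length (replicate k (rsym False False) @ map w1 x)))
     (length (replicate k (rsym False False) @ map w1 x))"
    by (rule scan_right[OF xs]) (auto simp: w1_def wsym_def ob_def)
  have xs': "xs = (replicate k (rsym False False) @ map w1 x) @ 3 # replicate (length x - 1) 3"
    using assms by (simp add: xs replicate_Suc[symmetric])
  have l: "length (replicate k (rsym False False) @ map w1 x) = k + k * k" using assms by simp
  have 2: "reach (sn Chk, tp lo xs, lo + int (k + k * k)) (sn (GH (TV False)), tp lo xs, lo + int (k + k * k)) 1"
    using step_same[of Chk "tp lo xs" "lo + int (k + k * k)" "GH (TV False)" Stay] tp_at[OF xs'] unfolding l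
    by (auto simp: isR_def)
  have 3: "reach (sn (GH (TV False)), tp lo xs, lo + int (Suc (k + k * k)) - 1) (sn (tgt (TV False)), tp lo xs, lo) (Suc (k + k * k) + 1)"
    by (rule go_home) (use assms in \<open>auto simp: xs_def p2l_nz p2l_len Suc_le_eq\<close>)
  show ?thesis
    by (rule reach_cong[OF reach_trans2[OF reach_trans2[OF 1 2] 3]]) (auto simp: l xs_def assms(1)[symmetric])
qed

lemma p2_iter:
  assumes "Suc k * Suc k \<le> length x"
  shows "reach (sn Chk, tp (- int (length x + k)) (p2l 0 k False (k * k)), - int (length x + k))
    (sn Chk, tp (- int (length x + Suc k)) (p2l 0 (Suc k) False (Suc k * Suc k)), - int (length x + Suc k))
    (20 * (length x + 1) * (length x + 1))"
proof -
  define lo where "lo = - int (length x + k)"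
  have xne: "x \<noteq> []" using assms by auto
  have kL: "k * k < length x" "k * k + k \<le> length x" "k * k + k + Suc k \<le> length x" "Suc k \<le> length x" using assms
    by (auto simp: algebra_simps)
  have 1: "reach (sn Chk, tp lo (p2l 0 k False (k * k)), lo) (sn (Cons False), tp lo (p2l 0 k False (k * k)), lo)
     (2 * (k + k * k) + 3)" by (rule chk_trip) (use kL in \<open>simp add:\<close>)
  have 2: "reach (sn (Cons False), tp lo (p2l 0 k False (k * k)), lo) (sn (Cons False), tp lo (p2l k k False (k * k + (k - 0))), lo)
     ((k - 0) * (2 * k + 2 * length x + 3))" by (rule cons_loop) (use kL in simp_all)
  have 3: "reach (sn (Cons False), tp lo (p2l k k False (k * k + k)), lo) (sn (if False then GH TChk else ExtGo), tp lo (p2l k k False (k * k + k)), lo + int k) (k + 1)"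
    by (rule cons_exit[OF xne])
  have 4: "reach (sn ExtGo, tp lo (p2l k k False (k * k + k)), lo + int (Suc k) - 1) (sn (Cons True), tp (lo - 1) (rsym True False # p2l k k False (k * k + k)), lo - 1) (Suc k + 3)"
    by (rule ext_go) (use xne in \<open>auto simp: p2l_nz p2l_len Suc_le_eq\<close>)
  have e4: "rsym True False # p2l k k False (k * k + k) = p2l 0 (Suc k) True (k * k + k)"
    by (simp add: p2l_def)
  have 5: "reach (sn (Cons True), tp (lo - 1) (p2l 0 (Suc k) True (k * k + k)), lo - 1)
     (sn (Cons True), tp (lo - 1) (p2l (Suc k) (Suc k) True (k * k + k + (Suc k - 0))), lo - 1)
     ((Suc k - 0) * (2 * Suc k + 2 * length x + 3))" by (rule cons_loop) (use kL in simp_all)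
  have 6: "reach (sn (Cons True), tp (lo - 1) (p2l (Suc k) (Suc k) True (k * k + k + Suc k)), lo - 1)
     (sn (if True then GH TChk else ExtGo), tp (lo - 1) (p2l (Suc k) (Suc k) True (k * k + k + Suc k)), lo - 1 + int (Suc k)) (Suc k + 1)"
    by (rule cons_exit[OF xne])
  have 7: "reach (sn (GH TChk), tp (lo - 1) (p2l (Suc k) (Suc k) True (k * k + k + Suc k)), lo - 1 + int (Suc (Suc k)) - 1)
     (sn (tgt TChk), tp (lo - 1) (p2l (Suc k) (Suc k) True (k * k + k + Suc k)), lo - 1) (Suc (Suc k) + 1)"
    by (rule go_home) (use xne in \<open>auto simp: p2l_nz p2l_len Suc_le_eq\<close>)
  have e7: "\<And>m. p2l (Suc k) (Suc k) True m = p2l 0 (Suc k) False m"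
    by (simp add: p2l_def)
  have b1: "k * (2 * k + 2 * length x + 3) \<le> length x * (4 * length x + 3)" using kL by (intro mult_le_mono) auto
  have b2: "Suc k * (2 * Suc k + 2 * length x + 3) \<le> length x * (4 * length x + 3)" using kL by (intro mult_le_mono) auto
  have b3: "k * k \<le> length x" using kL by simp
  have lo1: "lo - 1 = - int (length x + Suc k)" by (simp add: lo_def)
  show ?thesis
    apply (rule reach_cong[OF reach_trans2[OF reach_trans2[OF reach_trans2[OF reach_trans2[OF reach_trans2[OF reach_trans2[OF 1 2] 3] 4] 5] 6] 7]])
    unfolding e4 lo1
    using b1 b2 b3 kL by (auto simp: algebra_simps lo_def e7)
qed

lemma p2_loop:
  assumes "n * n = length x" "k \<le> n"
  shows "reach (sn Chk, tp (- int (length x + k)) (p2l 0 k False (k * k)), - int (length x + k))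
    (sn Chk, tp (- int (length x + n)) (p2l 0 n False (n * n)), - int (length x + n))
    ((n - k) * (20 * (length x + 1) * (length x + 1)))"
  using assms(2)
proof (induction "n - k" arbitrary: k)
  case 0 then show ?case by (simp add: reach_refl)
next
  case (Suc d)
  have "Suc k \<le> n" using Suc by simp
  then have "Suc k * Suc k \<le> length x" unfolding assms(1)[symmetric] by (intro mult_le_mono) auto
  from p2_iter[OF this] have 1: "reach (sn Chk, tp (- int (length x + k)) (p2l 0 k False (k * k)), - int (length x + k))
    (sn Chk, tp (- int (length x + Suc k)) (p2l 0 (Suc k) False (Suc k * Suc k)), - int (length x + Suc k))
    (20 * (length x + 1) * (length x + 1))" .
  have 2: "reach (sn Chk, tp (- int (length x + Suc k)) (p2l 0 (Suc k) False (Suc k * Suc k)), - int (length x + Suc k))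
    (sn Chk, tp (- int (length x + n)) (p2l 0 n False (n * n)), - int (length x + n))
    ((n - Suc k) * (20 * (length x + 1) * (length x + 1)))" by (rule Suc.hyps) (use Suc in auto)
  have e: "n - k = Suc (n - Suc k)" using Suc by simp
  show ?case by (rule reach_cong[OF reach_trans2[OF 1 2]]) (simp_all add: e)
qed

end



definition cellbits :: "pa \<Rightarrow> bool \<Rightarrow> bool \<Rightarrow> bool list" where
  "cellbits a d xb = [b0 a d xb, b1 a d xb, b2 a d xb]"

lemma tp_write_end: "(tp lo (pre @ replicate k 3))(lo + int (length pre) := c) = tp lo ((pre @ [c]) @ replicate (k - 1) 3)"
proof (cases k)
  case 0 then show ?thesis using tp_append[of lo pre c] by simp
next
  case (Suc k')
  then show ?thesis using tp_upd[of "pre @ replicate k 3" pre 3 "replicate k' 3" lo c] by simp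
qed

lemma tp_at_end: "tp lo (pre @ replicate k 3) (lo + int (length pre)) = 0 \<or> tp lo (pre @ replicate k 3) (lo + int (length pre)) = 3"
  by (cases k) (auto simp: tp_def)

lemma out_write:
  assumes "0 \<notin> set pre"
  shows "reach (sn (OutGo p a d xb), tp lo (pre @ replicate k 3), lo + int (length pre))
    (sn (Pass p a False), tp lo (pre @ map bitsym (cellbits a d xb) @ replicate (k - 3) 3), lo) (length pre + 7)"
proof -
  have c: "\<not> (tp lo (pre @ replicate k 3) (lo + int (length pre)) = 1 \<or> tp lo (pre @ replicate k 3) (lo + int (length pre)) = 2
     \<or> isW (tp lo (pre @ replicate k 3) (lo + int (length pre))) \<or> isR (tp lo (pre @ replicate k 3) (lo + int (length pre))))"
    using tp_at_end[of lo pre k] by auto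
  have 1: "reach (sn (OutGo p a d xb), tp lo (pre @ replicate k 3), lo + int (length pre))
     (sn (Out2 p a d xb), tp lo ((pre @ [bitsym (b0 a d xb)]) @ replicate (k - 1) 3), lo + int (length pre) + 1) 1"
    using step_any[of "OutGo p a d xb" "tp lo (pre @ replicate k 3)" "lo + int (length pre)" "Out2 p a d xb" "bitsym (b0 a d xb)" MoveR]
      c unfolding tp_write_end by (auto simp: sn.simps)
  have 2: "reach (sn (Out2 p a d xb), tp lo ((pre @ [bitsym (b0 a d xb)]) @ replicate (k - 1) 3), lo + int (length (pre @ [bitsym (b0 a d xb)])))
     (sn (Out3 p a d xb), tp lo ((pre @ [bitsym (b0 a d xb), bitsym (b1 a d xb)]) @ replicate (k - 1 - 1) 3), lo + int (length (pre @ [bitsym (b0 a d xb)])) + 1) 1"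
    using step_any[of "Out2 p a d xb" "tp lo ((pre @ [bitsym (b0 a d xb)]) @ replicate (k - 1) 3)" "lo + int (length (pre @ [bitsym (b0 a d xb)]))" "Out3 p a d xb" "bitsym (b1 a d xb)" MoveR]
    unfolding tp_write_end by (auto simp: sn.simps)
  have 3: "reach (sn (Out3 p a d xb), tp lo ((pre @ [bitsym (b0 a d xb), bitsym (b1 a d xb)]) @ replicate (k - 1 - 1) 3), lo + int (length (pre @ [bitsym (b0 a d xb), bitsym (b1 a d xb)])))
     (sn (GH (TPass p a)), tp lo ((pre @ [bitsym (b0 a d xb), bitsym (b1 a d xb), bitsym (b2 a d xb)]) @ replicate (k - 1 - 1 - 1) 3), lo + int (length (pre @ [bitsym (b0 a d xb), bitsym (b1 a d xb)]))) 1"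
    using step_any[of "Out3 p a d xb" "tp lo ((pre @ [bitsym (b0 a d xb), bitsym (b1 a d xb)]) @ replicate (k - 1 - 1) 3)" "lo + int (length (pre @ [bitsym (b0 a d xb), bitsym (b1 a d xb)]))" "GH (TPass p a)" "bitsym (b2 a d xb)" Stay]
    unfolding tp_write_end by (auto simp: sn.simps)
  define xs where "xs = (pre @ [bitsym (b0 a d xb), bitsym (b1 a d xb), bitsym (b2 a d xb)]) @ replicate (k - 1 - 1 - 1) 3"
  have 4: "reach (sn (GH (TPass p a)), tp lo xs, lo + int (length pre + 3) - 1) (sn (tgt (TPass p a)), tp lo xs, lo) (length pre + 3 + 1)"
    by (rule go_home) (use assms in \<open>auto simp: xs_def\<close>)
  have e: "xs = pre @ map bitsym (cellbits a d xb) @ replicate (k - 3) 3"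
    by (simp add: xs_def cellbits_def)
  show ?thesis
    apply (rule reach_cong[OF reach_trans2[OF reach_trans2[OF reach_trans2[OF 1 2] 3] 4[unfolded xs_def]]])
    using e[unfolded xs_def] by (auto simp: algebra_simps)
qed

lemma fold_or: "fold (\<lambda>c s. s \<or> Q c) ys s0 = (s0 \<or> (\<exists>c\<in>set ys. Q c))"
  by (induction ys arbitrary: s0) auto

definition w2 :: "bool \<Rightarrow> nat" where "w2 b = wsym b 2"

context
  fixes x :: "bool list" and n :: nat
begin

definition rl :: "nat \<Rightarrow> nat \<Rightarrow> bool \<Rightarrow> nat list" where
  "rl v f p = map (\<lambda>j. rsym (if j < f then \<not> p else p) (j < v)) [0..<n]"

definition p3l :: "nat \<Rightarrow> nat \<Rightarrow> bool \<Rightarrow> nat \<Rightarrow> bool list \<Rightarrow> nat list" where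
  "p3l v f p m out = rl v f p @ map w2 (take m x) @ map (w1) (drop m x) @ map bitsym out
     @ replicate (length x - length out) 3"

lemma rl_split: "f < n \<Longrightarrow> rl v f p = map (\<lambda>j. rsym (\<not> p) (j < v)) [0..<f] @ rsym p (f < v) # map (\<lambda>j. rsym p (j < v)) [Suc f..<n]"
  "f < n \<Longrightarrow> rl v (Suc f) p = map (\<lambda>j. rsym (\<not> p) (j < v)) [0..<f] @ rsym (\<not> p) (f < v) # map (\<lambda>j. rsym p (j < v)) [Suc f..<n]"
proof -
  assume f: "f < n"
  have u: "[0..<n] = [0..<f] @ f # [Suc f..<n]" using f
    by (metis le_add1 less_imp_add_positive upt_add_eq_append upt_conv_Cons zero_le)
  show "rl v f p = map (\<lambda>j. rsym (\<not> p) (j < v)) [0..<f] @ rsym p (f < v) # map (\<lambda>j. rsym p (j < v)) [Suc f..<n]"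
    unfolding rl_def u by auto
  show "rl v (Suc f) p = map (\<lambda>j. rsym (\<not> p) (j < v)) [0..<f] @ rsym (\<not> p) (f < v) # map (\<lambda>j. rsym p (j < v)) [Suc f..<n]"
    unfolding rl_def u by auto
qed

lemma rl_len[simp]: "length (rl v f p) = n" by (simp add: rl_def)

lemma rl_R: "c \<in> set (rl v f p) \<Longrightarrow> isR c" by (auto simp: rl_def)

lemma w_syms[simp]: "w1 b \<noteq> 0" "w2 b \<noteq> 0" "isW (w1 b)" "isW (w2 b)" "\<not> isR (w1 b)" "\<not> isR (w2 b)"
  "w1 b \<noteq> Suc 0" "w1 b \<noteq> 2" "w2 b \<noteq> Suc 0" "w2 b \<noteq> 2" "w2 b \<noteq> 6" "w2 b \<noteq> 7" "0 < w1 b" "0 < w2 b"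
  by (auto simp: w1_def w2_def wsym_def ob_def isW_def isR_def)

lemma p3l_nz: "0 \<notin> set (p3l v f p m out)"
  by (auto simp: p3l_def rl_def dest: in_set_takeD in_set_dropD)

lemma pass_head:
  fixes m :: nat and out :: "bool list"
  assumes "f < n"
  defines "rest \<equiv> map w2 (take m x) @ map w1 (drop m x) @ map bitsym out @ replicate (length x - length out) 3"
  shows "reach (sn (Pass p a False), tp lo (p3l v f p m out), lo)
    (sn (if a = A0 then FindW p (f = v) else OutGo p a (f = v) False), tp lo (rl v (Suc f) p @ rest), lo + int f + 1) (f + 1)"
proof -
  define pre where "pre = map (\<lambda>j. rsym (\<not> p) (j < v)) [0..<f]"
  define suf where "suf = map (\<lambda>j. rsym p (j < v)) [Suc f..<n]"
  have xs: "p3l v f p m out = pre @ rsym p (f < v) # (suf @ rest)"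
    using rl_split(1)[OF assms(1)] by (simp add: p3l_def pre_def suf_def rest_def)
  have xs2: "rl v (Suc f) p @ rest = pre @ rsym (\<not> p) (f < v) # (suf @ rest)"
    using rl_split(2)[OF assms(1)] by (simp add: pre_def suf_def)
  have 1: "reach (sn ((\<lambda>s. Pass p a s) False), tp lo (p3l v f p m out), lo + int (length ([]::nat list)))
    (sn ((\<lambda>s. Pass p a s) (fold (\<lambda>c s. s \<or> c = rsym (\<not> p) False) pre False)), tp lo (p3l v f p m out),
       lo + int (length ([]::nat list)) + int (length pre)) (length pre)"
    by (rule scan_right_gen[where bs = "rsym p (f < v) # (suf @ rest)"]) (auto simp: xs pre_def)
  have fo: "fold (\<lambda>c s. s \<or> c = rsym (\<not> p) False) pre False = (v < f)"
    unfolding fold_or by (auto simp: pre_def)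
  have lp: "length pre = f" by (simp add: pre_def)
  have d: "(\<not> f < v \<and> \<not> v < f) = (f = v)" by auto
  have 2: "reach (sn (Pass p a (v < f)), tp lo (p3l v f p m out), lo + int (length pre))
     (sn (if a = A0 then FindW p (f = v) else OutGo p a (f = v) False), tp lo (rl v (Suc f) p @ rest), lo + int (length pre) + 1) 1"
    using step[of "Pass p a (v < f)" "tp lo (p3l v f p m out)" "lo + int (length pre)" "rsym p (f < v)"
        "if a = A0 then FindW p (f = v) else OutGo p a (f = v) False" "rsym (\<not> p) (f < v)" MoveR]
    unfolding tp_upd[OF xs] xs2[symmetric] using tp_at[OF xs] d by auto
  show ?thesis
    by (rule reach_cong[OF reach_trans2[OF 1 2]]) (auto simp: fo lp)
qed

lemma pass_trip:
  assumes "f < n" "m \<le> length x" "a = A0 \<longrightarrow> m < length x"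
  shows "reach (sn (Pass p a False), tp lo (p3l v f p m out), lo)
    (sn (Pass p a False), tp lo (p3l v (Suc f) p (if a = A0 then Suc m else m) (out @ cellbits a (f = v) (if a = A0 then x ! m else False))), lo)
    (2 * (n + length x + length out) + 20)"
proof -
  define E where "E = replicate (length x - length out) (3::nat)"
  define rest where "rest = map w2 (take m x) @ map w1 (drop m x) @ map bitsym out @ E"
  have 1: "reach (sn (Pass p a False), tp lo (p3l v f p m out), lo)
    (sn (if a = A0 then FindW p (f = v) else OutGo p a (f = v) False), tp lo (rl v (Suc f) p @ rest), lo + int f + 1) (f + 1)"
    using pass_head[OF assms(1), where m=m and out=out and p=p and a=a and v=v and lo=lo] by (simp add: rest_def E_def)
  define suf where "suf = map (\<lambda>j. rsym p (j < v)) [Suc f..<n]"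
  define pre where "pre = map (\<lambda>j. rsym (\<not> p) (j < v)) [0..<f] @ [rsym (\<not> p) (f < v)]"
  have rlS: "rl v (Suc f) p = pre @ suf" using rl_split(2)[OF assms(1)] by (simp add: pre_def suf_def)
  have lpre: "length pre = Suc f" by (simp add: pre_def)
  have lsuf: "length suf = n - Suc f" by (simp add: suf_def)
  show ?thesis
  proof (cases "a = A0")
    case True
    have mL: "m < length x" using assms True by auto
    have xm: "drop m x = x ! m # drop (Suc m) x" using mL by (simp add: Cons_nth_drop_Suc)
    have tk: "take (Suc m) x = take m x @ [x ! m]" using mL by (simp add: take_Suc_conv_app_nth)
    have lt: "length (take m x) = m" using mL by simp
    have xs: "rl v (Suc f) p @ rest = pre @ (suf @ map w2 (take m x)) @ (map w1 (drop m x) @ map bitsym out @ E)"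
      by (simp add: rlS rest_def)
    have 2: "reach (sn (FindW p (f = v)), tp lo (rl v (Suc f) p @ rest), lo + int (length pre))
      (sn (FindW p (f = v)), tp lo (rl v (Suc f) p @ rest), lo + int (length pre) + int (length (suf @ map w2 (take m x))))
      (length (suf @ map w2 (take m x)))"
      by (rule scan_right[OF xs]) (auto simp: suf_def w2_def wsym_def ob_def dest: in_set_takeD)
    have xs': "rl v (Suc f) p @ rest = (pre @ suf @ map w2 (take m x)) @ w1 (x ! m) # (map w1 (drop (Suc m) x) @ map bitsym out @ E)"
      by (simp add: rlS rest_def xm)
    define rest2 where "rest2 = map w2 (take (Suc m) x) @ map w1 (drop (Suc m) x) @ map bitsym out @ E"
    have xs2: "(pre @ suf @ map w2 (take m x)) @ w2 (x ! m) # (map w1 (drop (Suc m) x) @ map bitsym out @ E) = rl v (Suc f) p @ rest2"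
      by (simp add: rlS rest2_def tk)
    have 3: "reach (sn (FindW p (f = v)), tp lo (rl v (Suc f) p @ rest), lo + int (length (pre @ suf @ map w2 (take m x))))
       (sn (OutGo p A0 (f = v) (x ! m)), tp lo (rl v (Suc f) p @ rest2), lo + int (length (pre @ suf @ map w2 (take m x))) + 1) 1"
      using step[of "FindW p (f = v)" "tp lo (rl v (Suc f) p @ rest)" "lo + int (length (pre @ suf @ map w2 (take m x)))" "w1 (x ! m)"
          "OutGo p A0 (f = v) (x ! m)" "w2 (x ! m)" MoveR]
      unfolding tp_upd[OF xs'] xs2 using tp_at[OF xs'] by (auto simp: sn.simps w1_def w2_def wsym_def ob_def)
    have xs3: "rl v (Suc f) p @ rest2 = (pre @ suf @ map w2 (take (Suc m) x)) @ (map w1 (drop (Suc m) x) @ map bitsym out) @ E"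
      by (simp add: rest2_def rlS)
    have 4: "reach (sn (OutGo p A0 (f = v) (x ! m)), tp lo (rl v (Suc f) p @ rest2), lo + int (length (pre @ suf @ map w2 (take (Suc m) x))))
       (sn (OutGo p A0 (f = v) (x ! m)), tp lo (rl v (Suc f) p @ rest2), lo + int (length (pre @ suf @ map w2 (take (Suc m) x))) + int (length (map w1 (drop (Suc m) x) @ map bitsym out)))
       (length (map w1 (drop (Suc m) x) @ map bitsym out))"
      by (rule scan_right[OF xs3]) (auto simp: sn.simps dest: in_set_dropD)
    define pre5 where "pre5 = rl v (Suc f) p @ map w2 (take (Suc m) x) @ map w1 (drop (Suc m) x) @ map bitsym out"
    have xs5: "rl v (Suc f) p @ rest2 = pre5 @ replicate (length x - length out) 3"
      by (simp add: pre5_def rest2_def E_def)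
    have 5: "reach (sn (OutGo p A0 (f = v) (x ! m)), tp lo (pre5 @ replicate (length x - length out) 3), lo + int (length pre5))
      (sn (Pass p A0 False), tp lo (pre5 @ map bitsym (cellbits A0 (f = v) (x ! m)) @ replicate (length x - length out - 3) 3), lo) (length pre5 + 7)"
      by (rule out_write) (auto simp: pre5_def rl_def dest: in_set_takeD in_set_dropD)
    have e5: "pre5 @ map bitsym (cellbits A0 (f = v) (x ! m)) @ replicate (length x - length out - 3) 3 = p3l v (Suc f) p (Suc m) (out @ cellbits A0 (f = v) (x ! m))"
      by (simp add: pre5_def p3l_def cellbits_def)
    have lpre5: "length pre5 = n + length x + length out" using mL by (simp add: pre5_def)
    show ?thesis
      apply (rule reach_cong[OF reach_trans2[OF reach_trans2[OF reach_trans2[OF reach_trans2[OF 1 2] 3] 4] 5[unfolded xs5[symmetric] e5]]])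
      using True assms mL unfolding lpre5 by (auto simp: lpre lsuf lt xs5 algebra_simps)
  next
    case False
    have xs: "rl v (Suc f) p @ rest = pre @ (suf @ map w2 (take m x) @ map w1 (drop m x) @ map bitsym out) @ E"
      by (simp add: rlS rest_def)
    have 2: "reach (sn (OutGo p a (f = v) False), tp lo (rl v (Suc f) p @ rest), lo + int (length pre))
      (sn (OutGo p a (f = v) False), tp lo (rl v (Suc f) p @ rest), lo + int (length pre) + int (length (suf @ map w2 (take m x) @ map w1 (drop m x) @ map bitsym out)))
      (length (suf @ map w2 (take m x) @ map w1 (drop m x) @ map bitsym out))"
      by (rule scan_right[OF xs]) (auto simp: sn.simps suf_def dest: in_set_takeD in_set_dropD)
    define pre5 where "pre5 = rl v (Suc f) p @ map w2 (take m x) @ map w1 (drop m x) @ map bitsym out"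
    have xs5: "rl v (Suc f) p @ rest = pre5 @ replicate (length x - length out) 3"
      by (simp add: pre5_def rest_def E_def)
    have 5: "reach (sn (OutGo p a (f = v) False), tp lo (pre5 @ replicate (length x - length out) 3), lo + int (length pre5))
      (sn (Pass p a False), tp lo (pre5 @ map bitsym (cellbits a (f = v) False) @ replicate (length x - length out - 3) 3), lo) (length pre5 + 7)"
      by (rule out_write) (auto simp: pre5_def rl_def dest: in_set_takeD in_set_dropD)
    have e5: "pre5 @ map bitsym (cellbits a (f = v) False) @ replicate (length x - length out - 3) 3 = p3l v (Suc f) p m (out @ cellbits a (f = v) False)"
      by (simp add: pre5_def p3l_def cellbits_def)
    have lpre5: "length pre5 = n + length x + length out" using assms by (simp add: pre5_def)
    show ?thesis
      apply (rule reach_cong[OF reach_trans2[OF reach_trans2[OF 1 2] 5[unfolded xs5[symmetric] e5]]])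
      using False assms unfolding lpre5 by (auto simp: lpre lsuf xs5 algebra_simps)
  qed
qed

definition prow :: "nat \<Rightarrow> pa \<Rightarrow> nat \<Rightarrow> bool list" where
  "prow v a f = concat (map (\<lambda>w. cellbits a (w = v) (x ! (v * n + w))) [f..<n])"

lemma cellbits_indep: "a \<noteq> A0 \<Longrightarrow> cellbits a d xb = cellbits a d xb'"
  by (cases a) (auto simp: cellbits_def b0_def b1_def b2_def)

lemma prow_step: "f < n \<Longrightarrow> prow v a f = cellbits a (f = v) (x ! (v * n + f)) @ prow v a (Suc f)"
  by (simp add: prow_def upt_conv_Cons)

lemma prow_len: "length (prow v a f) = 3 * (n - f)"
proof (induction "n - f" arbitrary: f)
  case 0 then show ?case by (simp add: prow_def)
next
  case (Suc d)
  then have "f < n" by simp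
  then show ?case using Suc prow_step[of f v a] by (simp add: cellbits_def)
qed

lemma pass_loop:
  assumes "f \<le> n" "v < n" "n * n = length x" "m \<le> length x" "a = A0 \<longrightarrow> m = v * n + f"
    "length out + 3 * (n - f) \<le> OB"
  shows "reach (sn (Pass p a False), tp lo (p3l v f p m out), lo)
    (sn (Pass p a False), tp lo (p3l v n p (if a = A0 then v * n + n else m) (out @ prow v a f)), lo)
    ((n - f) * (2 * (n + length x + OB) + 20))"
  using assms
proof (induction "n - f" arbitrary: f m out)
  case 0
  then have "f = n" by simp
  then show ?case using 0 by (auto simp: prow_def reach_refl)
next
  case (Suc d)
  have fn: "f < n" using Suc by simp
  have vn: "v * n + n \<le> length x" using Suc(4,5) by (metis add.commute mult_Suc mult_le_mono1 Suc_leI)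
  have mx: "a = A0 \<longrightarrow> m < length x" using Suc fn vn by auto
  have 1: "reach (sn (Pass p a False), tp lo (p3l v f p m out), lo)
    (sn (Pass p a False), tp lo (p3l v (Suc f) p (if a = A0 then Suc m else m) (out @ cellbits a (f = v) (if a = A0 then x ! m else False))), lo)
    (2 * (n + length x + length out) + 20)"
    by (rule pass_trip) (use fn Suc mx in auto)
  have cb: "cellbits a (f = v) (if a = A0 then x ! m else False) = cellbits a (f = v) (x ! (v * n + f))"
    using Suc(7) cellbits_indep by auto
  have 2: "reach (sn (Pass p a False), tp lo (p3l v (Suc f) p (if a = A0 then Suc m else m) (out @ cellbits a (f = v) (x ! (v * n + f)))), lo)
    (sn (Pass p a False), tp lo (p3l v n p (if a = A0 then v * n + n else (if a = A0 then Suc m else m)) ((out @ cellbits a (f = v) (x ! (v * n + f))) @ prow v a (Suc f))), lo)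
    ((n - Suc f) * (2 * (n + length x + OB) + 20))"
    apply (rule Suc.hyps)
    using Suc fn vn by (auto simp: cellbits_def)
  have e: "n - f = Suc (n - Suc f)" using fn by simp
  have b: "length out \<le> OB" using Suc by simp
  show ?case
    apply (rule reach_cong[OF reach_trans2[OF 1[unfolded cb] 2]])
    using fn b by (auto simp: prow_step e)
qed

end



lemma map_const_eq: "\<forall>j\<in>set xs. f j = c \<Longrightarrow> map f xs = replicate (length xs) c"
  by (induction xs) auto

lemma dlt_pass_nonR: "\<not> isR c \<Longrightarrow> dlt (Pass p a s) c = (GH (nxt a (\<not> p)), c, Stay)"
  by auto

context
  fixes x :: "bool list" and n :: nat
begin

lemma rl_full: "rl n v n p = rl n v 0 (\<not> p)"
  by (simp add: rl_def)

lemma rl0_split: "v < n \<Longrightarrow> rl n v 0 q = replicate v (rsym q True) @ rsym q False # replicate (n - Suc v) (rsym q False)"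
  "v < n \<Longrightarrow> rl n (Suc v) 0 q = replicate v (rsym q True) @ rsym q True # replicate (n - Suc v) (rsym q False)"
proof -
  assume f: "v < n"
  have u: "[0..<n] = [0..<v] @ v # [Suc v..<n]" using f
    by (metis le_add1 less_imp_add_positive upt_add_eq_append upt_conv_Cons zero_le)
  have a: "map (\<lambda>j. rsym q (j < v)) [0..<v] = replicate v (rsym q True)"
    by (subst map_const_eq) auto
  have b: "map (\<lambda>j. rsym q (j < v)) [Suc v..<n] = replicate (n - Suc v) (rsym q False)"
    by (subst map_const_eq) auto
  have a': "map (\<lambda>j. rsym q (j < Suc v)) [0..<v] = replicate v (rsym q True)"
    by (subst map_const_eq) auto
  have b': "map (\<lambda>j. rsym q (j < Suc v)) [Suc v..<n] = replicate (n - Suc v) (rsym q False)"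
    by (subst map_const_eq) auto
  show "rl n v 0 q = replicate v (rsym q True) @ rsym q False # replicate (n - Suc v) (rsym q False)"
    unfolding rl_def u using a b by simp
  show "rl n (Suc v) 0 q = replicate v (rsym q True) @ rsym q True # replicate (n - Suc v) (rsym q False)"
    unfolding rl_def u using a' b' by simp
qed

lemma rl_nn: "rl n n 0 q = replicate n (rsym q True)"
  unfolding rl_def by (subst map_const_eq) auto

lemma pass_exit:
  assumes "x \<noteq> []"
  shows "reach (sn (Pass p a False), tp lo (p3l x n v n p m out), lo) (sn (tgt (nxt a (\<not> p))), tp lo (p3l x n v n p m out), lo) (2 * n + 3)"
proof -
  define xs where "xs = p3l x n v n p m out"
  define rest where "rest = map w2 (take m x) @ map w1 (drop m x) @ map bitsym out @ replicate (length x - length out) (3::nat)"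
  have xs: "xs = [] @ rl n v n p @ rest" by (simp add: xs_def p3l_def rest_def)
  have 1: "reach (sn ((\<lambda>s. Pass p a s) False), tp lo xs, lo + int (length ([]::nat list)))
    (sn ((\<lambda>s. Pass p a s) (fold (\<lambda>c s. s \<or> c = rsym (\<not> p) False) (rl n v n p) False)), tp lo xs,
       lo + int (length ([]::nat list)) + int (length (rl n v n p))) (length (rl n v n p))"
    by (rule scan_right_gen[OF xs]) (auto simp: rl_def)
  define s' where "s' = fold (\<lambda>c s. s \<or> c = rsym (\<not> p) False) (rl n v n p) False"
  have c: "\<not> isR (tp lo xs (lo + int (length (rl n v n p))))"
    by (rule tp_at_P[where ys = rest]) (use assms in \<open>auto simp: xs_def p3l_def rest_def dest: in_set_takeD in_set_dropD\<close>)
  have 2: "reach (sn (Pass p a s'), tp lo xs, lo + int n) (sn (GH (nxt a (\<not> p))), tp lo xs, lo + int n) 1"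
    using step_same[of "Pass p a s'" "tp lo xs" "lo + int n" "GH (nxt a (\<not> p))" Stay] c dlt_pass_nonR by simp
  have 3: "reach (sn (GH (nxt a (\<not> p))), tp lo xs, lo + int (Suc n) - 1) (sn (tgt (nxt a (\<not> p))), tp lo xs, lo) (Suc n + 1)"
    by (rule go_home) (use assms in \<open>auto simp: xs_def p3l_nz p3l_def Suc_le_eq rl_def\<close>)
  show ?thesis
    by (rule reach_cong[OF reach_trans2[OF reach_trans2[OF 1 2] 3]]) (auto simp: s'_def xs_def)
qed

lemma adv_trip:
  assumes "v < n" "x \<noteq> []"
  shows "reach (sn (Adv q), tp lo (p3l x n v 0 q m out), lo) (sn (V q), tp lo (p3l x n (Suc v) 0 q m out), lo) (2 * v + 4)"
proof -
  define rest where "rest = map w2 (take m x) @ map w1 (drop m x) @ map bitsym out @ replicate (length x - length out) (3::nat)"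
  have xs: "p3l x n v 0 q m out = [] @ replicate v (rsym q True) @ (rsym q False # replicate (n - Suc v) (rsym q False) @ rest)"
    using rl0_split(1)[OF assms(1)] by (simp add: p3l_def rest_def)
  have xs': "p3l x n v 0 q m out = replicate v (rsym q True) @ rsym q False # (replicate (n - Suc v) (rsym q False) @ rest)"
    using xs by simp
  have xs2: "p3l x n (Suc v) 0 q m out = replicate v (rsym q True) @ rsym q True # (replicate (n - Suc v) (rsym q False) @ rest)"
    using rl0_split(2)[OF assms(1)] by (simp add: p3l_def rest_def)
  have 1: "reach (sn (Adv q), tp lo (p3l x n v 0 q m out), lo + int (length ([]::nat list)))
    (sn (Adv q), tp lo (p3l x n v 0 q m out), lo + int (length ([]::nat list)) + int (length (replicate v (rsym q True))))
    (length (replicate v (rsym q True)))"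
    by (rule scan_right[OF xs]) auto
  have 2: "reach (sn (Adv q), tp lo (p3l x n v 0 q m out), lo + int (length (replicate v (rsym q True))))
    (sn (GH (TV q)), tp lo (p3l x n (Suc v) 0 q m out), lo + int (length (replicate v (rsym q True)))) 1"
    using step[of "Adv q" "tp lo (p3l x n v 0 q m out)" "lo + int (length (replicate v (rsym q True)))" "rsym q False" "GH (TV q)" "rsym q True" Stay]
    unfolding tp_upd[OF xs'] xs2[symmetric] using tp_at[OF xs'] by auto
  have 3: "reach (sn (GH (TV q)), tp lo (p3l x n (Suc v) 0 q m out), lo + int (Suc v) - 1) (sn (tgt (TV q)), tp lo (p3l x n (Suc v) 0 q m out), lo) (Suc v + 1)"
    by (rule go_home) (use assms in \<open>auto simp: p3l_nz p3l_def rl_def\<close>)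
  show ?thesis
    by (rule reach_cong[OF reach_trans2[OF reach_trans2[OF 1 2] 3]]) auto
qed

lemma v_start:
  assumes "v < n"
  shows "reach (sn (V q), tp lo (p3l x n v 0 q m out), lo) (sn (Pass q A0 False), tp lo (p3l x n v 0 q m out), lo) (2 * v + 4)"
proof -
  define rest where "rest = map w2 (take m x) @ map w1 (drop m x) @ map bitsym out @ replicate (length x - length out) (3::nat)"
  have xs: "p3l x n v 0 q m out = [] @ replicate v (rsym q True) @ (rsym q False # replicate (n - Suc v) (rsym q False) @ rest)"
    using rl0_split(1)[OF assms(1)] by (simp add: p3l_def rest_def)
  have xs': "p3l x n v 0 q m out = replicate v (rsym q True) @ rsym q False # (replicate (n - Suc v) (rsym q False) @ rest)"
    using xs by simp
  have 1: "reach (sn (V q), tp lo (p3l x n v 0 q m out), lo + int (length ([]::nat list)))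
    (sn (V q), tp lo (p3l x n v 0 q m out), lo + int (length ([]::nat list)) + int (length (replicate v (rsym q True))))
    (length (replicate v (rsym q True)))"
    by (rule scan_right[OF xs]) auto
  have 2: "reach (sn (V q), tp lo (p3l x n v 0 q m out), lo + int (length (replicate v (rsym q True))))
    (sn (GH (TPass q A0)), tp lo (p3l x n v 0 q m out), lo + int (length (replicate v (rsym q True)))) 1"
    using step_same[of "V q" "tp lo (p3l x n v 0 q m out)" "lo + int (length (replicate v (rsym q True)))" "GH (TPass q A0)" Stay]
    using tp_at[OF xs'] by auto
  have 3: "reach (sn (GH (TPass q A0)), tp lo (p3l x n v 0 q m out), lo + int (Suc v) - 1) (sn (tgt (TPass q A0)), tp lo (p3l x n v 0 q m out), lo) (Suc v + 1)"
    by (rule go_home) (use assms in \<open>auto simp: p3l_nz p3l_def rl_def\<close>)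
  show ?thesis
    by (rule reach_cong[OF reach_trans2[OF reach_trans2[OF 1 2] 3]]) auto
qed

lemma v_halt:
  assumes "x \<noteq> []"
  shows "reach (sn (V q), tp lo (p3l x n n 0 q m out), lo) (1, tp lo (p3l x n n 0 q m out), lo + int n) (n + 1)"
proof -
  define rest where "rest = map w2 (take m x) @ map w1 (drop m x) @ map bitsym out @ replicate (length x - length out) (3::nat)"
  have xs: "p3l x n n 0 q m out = [] @ replicate n (rsym q True) @ rest"
    using rl_nn by (simp add: p3l_def rest_def)
  have 1: "reach (sn (V q), tp lo (p3l x n n 0 q m out), lo + int (length ([]::nat list)))
    (sn (V q), tp lo (p3l x n n 0 q m out), lo + int (length ([]::nat list)) + int (length (replicate n (rsym q True))))
    (length (replicate n (rsym q True)))"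
    by (rule scan_right[OF xs]) auto
  have c: "\<not> isR (tp lo (p3l x n n 0 q m out) (lo + int (length (replicate n (rsym q True)))))"
    by (rule tp_at_P[where ys = rest]) (use assms xs in \<open>auto simp: rest_def dest: in_set_takeD in_set_dropD\<close>)
  have d: "\<And>c. \<not> isR c \<Longrightarrow> dlt (V q) c = (Halt, c, Stay)" by auto
  have 2: "reach (sn (V q), tp lo (p3l x n n 0 q m out), lo + int n) (sn Halt, tp lo (p3l x n n 0 q m out), lo + int n) 1"
    using step_same[of "V q" "tp lo (p3l x n n 0 q m out)" "lo + int n" Halt Stay] c d by simp
  show ?thesis
    by (rule reach_cong[OF reach_trans2[OF 1 2]]) (auto simp: sn_Halt)
qed

definition rowout :: "nat \<Rightarrow> bool list" where
  "rowout v = prow x n v A0 0 @ prow x n v A1 0 @ prow x n v A2 0"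

lemma rowout_len: "length (rowout v) = 9 * n"
  by (simp add: rowout_def prow_len)

lemma row_step:
  assumes "v < n" "n * n = length x" "x \<noteq> []" "length out + 9 * n \<le> 9 * length x"
  shows "reach (sn (V p), tp lo (p3l x n v 0 p (v * n) out), lo)
    (sn (V (\<not> p)), tp lo (p3l x n (Suc v) 0 (\<not> p) (Suc v * n) (out @ rowout v)), lo)
    (3 * (n * (2 * (n + length x + 9 * length x) + 20)) + 3 * (2 * n + 3) + 2 * (2 * v + 4))"
proof -
  have vn: "v * n + n \<le> length x" using assms(1,2) by (metis add.commute mult_Suc mult_le_mono1 Suc_leI)
  have 1: "reach (sn (V p), tp lo (p3l x n v 0 p (v * n) out), lo) (sn (Pass p A0 False), tp lo (p3l x n v 0 p (v * n) out), lo) (2 * v + 4)"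
    by (rule v_start[OF assms(1)])
  have 2: "reach (sn (Pass p A0 False), tp lo (p3l x n v 0 p (v * n) out), lo)
    (sn (Pass p A0 False), tp lo (p3l x n v n p (if A0 = A0 then v * n + n else v * n) (out @ prow x n v A0 0)), lo)
    ((n - 0) * (2 * (n + length x + 9 * length x) + 20))"
    by (rule pass_loop) (use assms vn in auto)
  have 3: "reach (sn (Pass p A0 False), tp lo (p3l x n v n p (v * n + n) (out @ prow x n v A0 0)), lo)
     (sn (tgt (nxt A0 (\<not> p))), tp lo (p3l x n v n p (v * n + n) (out @ prow x n v A0 0)), lo) (2 * n + 3)"
    by (rule pass_exit[OF assms(3)])
  have 4: "reach (sn (Pass (\<not> p) A1 False), tp lo (p3l x n v 0 (\<not> p) (v * n + n) (out @ prow x n v A0 0)), lo)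
    (sn (Pass (\<not> p) A1 False), tp lo (p3l x n v n (\<not> p) (if A1 = A0 then v * n + n else v * n + n) ((out @ prow x n v A0 0) @ prow x n v A1 0)), lo)
    ((n - 0) * (2 * (n + length x + 9 * length x) + 20))"
    by (rule pass_loop) (use assms vn in \<open>auto simp: prow_len\<close>)
  have 5: "reach (sn (Pass (\<not> p) A1 False), tp lo (p3l x n v n (\<not> p) (v * n + n) ((out @ prow x n v A0 0) @ prow x n v A1 0)), lo)
     (sn (tgt (nxt A1 (\<not> \<not> p))), tp lo (p3l x n v n (\<not> p) (v * n + n) ((out @ prow x n v A0 0) @ prow x n v A1 0)), lo) (2 * n + 3)"
    by (rule pass_exit[OF assms(3)])
  have 6: "reach (sn (Pass p A2 False), tp lo (p3l x n v 0 p (v * n + n) ((out @ prow x n v A0 0) @ prow x n v A1 0)), lo)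
    (sn (Pass p A2 False), tp lo (p3l x n v n p (if A2 = A0 then v * n + n else v * n + n) (((out @ prow x n v A0 0) @ prow x n v A1 0) @ prow x n v A2 0)), lo)
    ((n - 0) * (2 * (n + length x + 9 * length x) + 20))"
    by (rule pass_loop) (use assms vn in \<open>auto simp: prow_len\<close>)
  have 7: "reach (sn (Pass p A2 False), tp lo (p3l x n v n p (v * n + n) (((out @ prow x n v A0 0) @ prow x n v A1 0) @ prow x n v A2 0)), lo)
     (sn (tgt (nxt A2 (\<not> p))), tp lo (p3l x n v n p (v * n + n) (((out @ prow x n v A0 0) @ prow x n v A1 0) @ prow x n v A2 0)), lo) (2 * n + 3)"
    by (rule pass_exit[OF assms(3)])
  have 8: "reach (sn (Adv (\<not> p)), tp lo (p3l x n v 0 (\<not> p) (v * n + n) (((out @ prow x n v A0 0) @ prow x n v A1 0) @ prow x n v A2 0)), lo)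
     (sn (V (\<not> p)), tp lo (p3l x n (Suc v) 0 (\<not> p) (v * n + n) (((out @ prow x n v A0 0) @ prow x n v A1 0) @ prow x n v A2 0)), lo) (2 * v + 4)"
    by (rule adv_trip[OF assms(1,3)])
  have rf: "\<And>q m out. p3l x n v n q m out = p3l x n v 0 (\<not> q) m out"
    by (simp add: p3l_def rl_full)
  show ?thesis
    apply (rule reach_cong[OF reach_trans2[OF reach_trans2[OF reach_trans2[OF reach_trans2[OF reach_trans2[OF reach_trans2[OF reach_trans2[OF 1 2] 3] 4] 5] 6] 7] 8]])
    by (auto simp: rf rowout_def add.commute)
qed

definition allout :: "nat \<Rightarrow> bool list" where
  "allout v = concat (map rowout [0..<v])"

lemma allout_len: "length (allout v) = 9 * n * v"
  by (induction v) (auto simp: allout_def rowout_len)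

lemma allout_Suc: "allout (Suc v) = allout v @ rowout v"
  by (simp add: allout_def)

lemma rows_loop:
  assumes "v \<le> n" "n * n = length x" "x \<noteq> []"
  shows "\<exists>q. reach (sn (V p), tp lo (p3l x n v 0 p (v * n) (allout v)), lo)
    (sn (V q), tp lo (p3l x n n 0 q (n * n) (allout n)), lo)
    ((n - v) * (3 * (n * (2 * (n + length x + 9 * length x) + 20)) + 3 * (2 * n + 3) + 2 * (2 * n + 4)))"
  using assms
proof (induction "n - v" arbitrary: v p)
  case 0
  then have "v = n" by simp
  then show ?case by (auto intro: reach_refl)
next
  case (Suc d)
  have vn: "v < n" using Suc by simp
  have ol: "length (allout v) + 9 * n \<le> 9 * length x"
  proof -
    have "9 * n * v + 9 * n = 9 * n * Suc v" by simp
    also have "\<dots> \<le> 9 * n * n" using vn by (intro mult_le_mono2) simp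
    finally show ?thesis unfolding allout_len Suc(4)[symmetric] by simp
  qed
  have 1: "reach (sn (V p), tp lo (p3l x n v 0 p (v * n) (allout v)), lo)
    (sn (V (\<not> p)), tp lo (p3l x n (Suc v) 0 (\<not> p) (Suc v * n) (allout v @ rowout v)), lo)
    (3 * (n * (2 * (n + length x + 9 * length x) + 20)) + 3 * (2 * n + 3) + 2 * (2 * v + 4))"
    by (rule row_step) (use vn Suc ol in auto)
  have "\<exists>q. reach (sn (V (\<not> p)), tp lo (p3l x n (Suc v) 0 (\<not> p) (Suc v * n) (allout (Suc v))), lo)
    (sn (V q), tp lo (p3l x n n 0 q (n * n) (allout n)), lo)
    ((n - Suc v) * (3 * (n * (2 * (n + length x + 9 * length x) + 20)) + 3 * (2 * n + 3) + 2 * (2 * n + 4)))"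
    by (rule Suc.hyps(1)) (use Suc vn in auto)
  then obtain q where 2: "reach (sn (V (\<not> p)), tp lo (p3l x n (Suc v) 0 (\<not> p) (Suc v * n) (allout (Suc v))), lo)
    (sn (V q), tp lo (p3l x n n 0 q (n * n) (allout n)), lo)
    ((n - Suc v) * (3 * (n * (2 * (n + length x + 9 * length x) + 20)) + 3 * (2 * n + 3) + 2 * (2 * n + 4)))" by blast
  have e: "n - v = Suc (n - Suc v)" using vn by simp
  show ?case
    apply (rule exI[of _ q])
    apply (rule reach_cong[OF reach_trans2[OF 1 2]])
    using vn by (auto simp: allout_Suc e)
qed

lemma p3_all:
  assumes "n * n = length x" "x \<noteq> []"
  shows "\<exists>q. reach (sn (V False), tp lo (p3l x n 0 0 False 0 []), lo)
    (1, tp lo (p3l x n n 0 q (n * n) (allout n)), lo + int n)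
    (n * (3 * (n * (2 * (n + length x + 9 * length x) + 20)) + 3 * (2 * n + 3) + 2 * (2 * n + 4)) + (n + 1))"
proof -
  obtain q where 1: "reach (sn (V False), tp lo (p3l x n 0 0 False (0 * n) (allout 0)), lo)
    (sn (V q), tp lo (p3l x n n 0 q (n * n) (allout n)), lo)
    ((n - 0) * (3 * (n * (2 * (n + length x + 9 * length x) + 20)) + 3 * (2 * n + 3) + 2 * (2 * n + 4)))"
    using rows_loop[of 0 False lo] assms by auto
  show ?thesis
    using reach_trans[OF 1 v_halt[OF assms(2)]] by (auto simp: allout_def)
qed

end



definition BB :: "nat \<Rightarrow> nat \<Rightarrow> nat" where
  "BB n L = 1 + L * (2 * L + 2) + (2 * L + 3) + n * (20 * (L + 1) * (L + 1)) + (2 * (n + n * n) + 3)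
    + (n * (3 * (n * (2 * (n + L + 9 * L) + 20)) + 3 * (2 * n + 3) + 2 * (2 * n + 4)) + (n + 1))"

lemma run_main:
  assumes "n * n = length x" "x \<noteq> []"
  shows "\<exists>q. reach (tm_init x) (1, tp (- int (length x + n)) (p3l x n n 0 q (n * n) (allout x n n)), - int (length x + n) + int n)
     (BB n (length x))"
proof -
  have 1: "reach (tm_init x) (sn Chk, tp (- int (length x + 0)) (p2l x 0 0 False (0 * 0)), - int (length x + 0))
     (1 + length x * (2 * length x + 2) + (2 * length x + 3))"
    using p1_all[OF assms(2)] by (simp add: p2l_def)
  have 2: "reach (sn Chk, tp (- int (length x + 0)) (p2l x 0 0 False (0 * 0)), - int (length x + 0))
    (sn Chk, tp (- int (length x + n)) (p2l x 0 n False (n * n)), - int (length x + n))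
    ((n - 0) * (20 * (length x + 1) * (length x + 1)))"
    by (rule p2_loop[OF assms(1)]) simp
  have 3: "reach (sn Chk, tp (- int (length x + n)) (p2l x 0 n False (n * n)), - int (length x + n))
     (sn (V False), tp (- int (length x + n)) (p2l x 0 n False (n * n)), - int (length x + n))
     (2 * (n + n * n) + 3)"
    by (rule chk_end[OF assms])
  have e: "p2l x 0 n False (n * n) = p3l x n 0 0 False 0 []"
    using assms(1) by (simp add: p2l_def p3l_def rl_def map_replicate_const)
  obtain q where 4: "reach (sn (V False), tp (- int (length x + n)) (p3l x n 0 0 False 0 []), - int (length x + n))
    (1, tp (- int (length x + n)) (p3l x n n 0 q (n * n) (allout x n n)), - int (length x + n) + int n)
    (n * (3 * (n * (2 * (n + length x + 9 * length x) + 20)) + 3 * (2 * n + 3) + 2 * (2 * n + 4)) + (n + 1))"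
    using p3_all[OF assms] by blast
  show ?thesis
    apply (rule exI[of _ q])
    apply (rule reach_cong[OF reach_trans[OF reach_trans[OF reach_trans[OF 1 2] 3] 4[folded e]]])
    by (auto simp: BB_def)
qed

lemma computes:
  assumes "n * n = length x" "x \<noteq> []"
  shows "\<exists>t\<le>BB n (length x). tm_computes_in Mch x (allout x n n) t"
proof -
  obtain q where r: "reach (tm_init x) (1, tp (- int (length x + n)) (p3l x n n 0 q (n * n) (allout x n n)), - int (length x + n) + int n)
     (BB n (length x))" using run_main[OF assms] by blast
  then obtain t where t: "t \<le> BB n (length x)"
    "tm_run Mch t (tm_init x) = (1, tp (- int (length x + n)) (p3l x n n 0 q (n * n) (allout x n n)), - int (length x + n) + int n)"
    unfolding reach_def by blast
  define out where "out = allout x n n"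
  define pre where "pre = rl n n 0 q @ map w2 x"
  have lo: "length out = 9 * length x" using assms(1) by (simp add: out_def allout_len)
  have lp: "length pre = n + length x" by (simp add: pre_def)
  have list: "p3l x n n 0 q (n * n) out = pre @ map bitsym out"
    using assms(1) lo by (simp add: p3l_def pre_def)
  have a: "\<forall>i<length out. tp (- int (length x + n)) (pre @ map bitsym out) (int i) = bitsym (out ! i)"
  proof (intro allI impI)
    fix i assume i: "i < length out"
    have "nat (int i - - int (length x + n)) = length pre + i" using lp by simp
    then show "tp (- int (length x + n)) (pre @ map bitsym out) (int i) = bitsym (out ! i)"
      using i lp by (simp add: tp_def nth_append)
  qed
  have b: "tp (- int (length x + n)) (pre @ map bitsym out) (int (length out)) = 0"
    using lp by (simp add: tp_def)
  have "tm_computes_in Mch x out t"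
    unfolding tm_computes_in_def t(2) using a b list[unfolded out_def] by (simp add: out_def)
  then show ?thesis using t(1) unfolding out_def by blast
qed



lemma kl_len: "length kl = 9" by (simp add: kl_def)

lemma k_step:
  assumes "i < 9"
  shows "reach (sn (K i), tp 0 (map bitsym (take i kl)), int i)
     (sn (if i < 8 then K (Suc i) else Halt), tp 0 (map bitsym (take (Suc i) kl)), int (Suc i)) 1"
proof -
  have tk: "take (Suc i) kl = take i kl @ [kl ! i]" using assms by (simp add: take_Suc_conv_app_nth kl_len)
  have li: "length (map bitsym (take i kl)) = i" using assms by (simp add: kl_len)
  show ?thesis
    using step_any[of "K i" "tp 0 (map bitsym (take i kl))" "int i" "if i < 8 then K (Suc i) else Halt" "bitsym (kl ! i)" MoveR]
      tp_append[of 0 "map bitsym (take i kl)" "bitsym (kl ! i)"] unfolding li by (simp add: tk add.commute)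
qed

lemma k_loop:
  assumes "1 \<le> i" "i \<le> 8"
  shows "reach (sn (K i), tp 0 (map bitsym (take i kl)), int i) (1, tp 0 (map bitsym kl), 9) (9 - i)"
  using assms
proof (induction "8 - i" arbitrary: i)
  case 0
  then have "i = 8" by simp
  then show ?case using k_step[of 8] by (simp add: sn_Halt kl_len)
next
  case (Suc d)
  have 1: "reach (sn (K i), tp 0 (map bitsym (take i kl)), int i)
     (sn (K (Suc i)), tp 0 (map bitsym (take (Suc i) kl)), int (Suc i)) 1"
  proof -
    have "i < 8" using Suc by simp
    then show ?thesis using k_step[of i] by simp
  qed
  have 2: "reach (sn (K (Suc i)), tp 0 (map bitsym (take (Suc i) kl)), int (Suc i)) (1, tp 0 (map bitsym kl), 9) (9 - Suc i)"
    by (rule Suc.hyps) (use Suc in auto)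
  show ?case by (rule reach_cong[OF reach_trans2[OF 1 2]]) (use Suc in auto)
qed

lemma empty_run: "tm_computes_in Mch [] kl 9"
proof -
  have ti: "tm_init [] = (sn Start, tp 0 [], 0)"
    by (auto simp: tm_init_def tp_def sn.simps)
  have 1: "reach (sn Start, tp 0 [], 0) (sn (K 1), tp 0 (map bitsym (take 1 kl)), int 1) 1"
    using step_any[of Start "tp 0 []" 0 "K 1" "bitsym False" MoveR] tp_append[of 0 "[]" "bitsym False"]
    by (simp add: tp_def kl_def)
  have r: "reach (tm_init []) (1, tp 0 (map bitsym kl), 9) 9"
    unfolding ti using reach_trans[OF 1 k_loop[of 1]] by simp
  then obtain t where t: "t \<le> 9" "tm_run Mch t (tm_init []) = (1, tp 0 (map bitsym kl), 9)"
    unfolding reach_def by blast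
  have "tm_run Mch 9 (tm_init []) = tm_run Mch (9 - t) (tm_run Mch t (tm_init []))"
    using run_add[of t "9 - t"] t(1) by simp
  also have "\<dots> = (1, tp 0 (map bitsym kl), 9)" unfolding t(2) by (rule halted)
  finally have r9: "tm_run Mch 9 (tm_init []) = (1, tp 0 (map bitsym kl), 9)" .
  show ?thesis
    unfolding tm_computes_in_def r9 by (auto simp: tp_def kl_len)
qed



definition Eg :: "(nat \<Rightarrow> nat \<Rightarrow> bool) \<Rightarrow> nat \<Rightarrow> nat \<Rightarrow> nat \<Rightarrow> bool" where
  "Eg E n i j \<longleftrightarrow> i < 3 * n \<and> j < 3 * n \<and> ((i div 3 = j div 3 \<and> i \<noteq> j) \<or> (i mod 3 = 0 \<and> j mod 3 = 0 \<and> E (i div 3) (j div 3)))"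

lemma Eg_sym: "(\<forall>u v. E u v \<longrightarrow> E v u) \<Longrightarrow> Eg E n u v \<Longrightarrow> Eg E n v u"
  unfolding Eg_def by metis

lemma graph_Eg: "graph {0..<n} E \<Longrightarrow> graph {0..<3 * n} (Eg E n)"
proof -
  assume g: "graph {0..<n} E"
  have s: "\<forall>u v. E u v \<longrightarrow> E v u" using g by (simp add: graph_def)
  have 1: "\<forall>u v. Eg E n u v \<longrightarrow> u \<in> {0..<3 * n} \<and> v \<in> {0..<3 * n}" by (simp add: Eg_def)
  have 2: "\<forall>u v. Eg E n u v \<longrightarrow> Eg E n v u" using Eg_sym[OF s] by blast
  have irr: "\<forall>v. \<not> E v v" using g by (simp add: graph_def)
  have 3: "\<forall>v. \<not> Eg E n v v" using irr by (simp add: Eg_def)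
  show ?thesis unfolding graph_def using 1 2 3 by simp
qed

lemma mod3_cancel: "a < 3 \<Longrightarrow> b < 3 \<Longrightarrow> (C + a) mod 3 = (C + b) mod 3 \<Longrightarrow> a = (b::nat)"
proof -
  assume a: "a < 3" "b < 3" "(C + a) mod 3 = (C + b) mod 3"
  have c3: "x < 3 \<Longrightarrow> x = 0 \<or> x = 1 \<or> x = 2" for x :: nat by arith
  have r: "C mod 3 < 3" by simp
  have "(C mod 3 + a) mod 3 = (C mod 3 + b) mod 3" using a(3) by (simp add: mod_add_left_eq)
  then show ?thesis using c3[OF a(1)] c3[OF a(2)] c3[OF r]
    by (elim disjE) simp_all
qed

lemma fall_to_col:
  assumes g: "graph {0..<n} E" and f: "fall_coloring {0..<3 * n} (Eg E n) 3 P"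
  shows "colorable {0..<n} E 3"
proof -
  have pa: "partition_on {0..<3 * n} P" and fin: "finite P" and c3: "card P = 3"
    and ind: "\<forall>A\<in>P. independent (Eg E n) A" using f by (auto simp: fall_coloring_def)
  obtain h :: "nat set \<Rightarrow> nat" where h: "bij_betw h P {0..<3}" using ex_bij_betw_finite_nat[OF fin] c3 by auto
  have U: "\<Union>P = {0..<3 * n}" using partition_onD1[OF pa] by simp
  define blk where "blk i = (SOME B. B \<in> P \<and> i \<in> B)" for i
  have blk: "blk i \<in> P \<and> i \<in> blk i" if "i < 3 * n" for i
  proof -
    have "\<exists>B. B \<in> P \<and> i \<in> B" using U that by auto
    then show ?thesis unfolding blk_def by (rule someI_ex)
  qed
  define c where "c v = h (blk (3 * v))" for v
  have "proper_coloring {0..<n} E 3 c"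
    unfolding proper_coloring_def
  proof (intro conjI ballI impI)
    fix v assume "v \<in> {0..<n}"
    then have "blk (3 * v) \<in> P" using blk[of "3 * v"] by auto
    then show "c v < 3" using h unfolding c_def bij_betw_def by auto
  next
    fix u v assume u: "u \<in> {0..<n}" and v: "v \<in> {0..<n}" and e: "E u v"
    have bu: "blk (3 * u) \<in> P" "3 * u \<in> blk (3 * u)" using blk[of "3 * u"] u by auto
    have bv: "blk (3 * v) \<in> P" "3 * v \<in> blk (3 * v)" using blk[of "3 * v"] v by auto
    have eg: "Eg E n (3 * u) (3 * v)" using u v e by (auto simp: Eg_def)
    show "c u \<noteq> c v"
    proof
      assume "c u = c v"
      then have "blk (3 * u) = blk (3 * v)" using h bu bv unfolding c_def bij_betw_def inj_on_def by auto
      then show False using ind bu bv eg unfolding independent_def by metis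
    qed
  qed
  then show ?thesis unfolding colorable_def by blast
qed

lemma col_to_fall:
  assumes g: "graph {0..<n} E" and n: "0 < n" and c: "proper_coloring {0..<n} E 3 c"
  shows "fall_colorable {0..<3 * n} (Eg E n) 3"
proof -
  define col where "col i = (c (i div 3) + i mod 3) mod 3" for i
  define A where "A k = {i \<in> {0..<3 * n}. col i = k}" for k
  define P where "P = A ` {0..<3}"
  have cl: "c v < 3" if "v < n" for v using c that by (auto simp: proper_coloring_def)
  have wit: "3 * v + (k + 3 - c v) mod 3 \<in> A k" if "v < n" "k < 3" for v k
  proof -
    have "col (3 * v + (k + 3 - c v) mod 3) = k"
      using cl[OF that(1)] that(2) unfolding col_def by (auto simp: mod_add_left_eq mod_add_right_eq)
    moreover have "3 * v + (k + 3 - c v) mod 3 < 3 * n" using that(1) by linarith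
    ultimately show ?thesis by (simp add: A_def)
  qed
  have Ane: "A k \<noteq> {}" if "k < 3" for k using wit[OF n that] by auto
  have Adisj: "A k \<inter> A k' = {}" if "k \<noteq> k'" for k k' using that by (auto simp: A_def)
  have Ainj: "inj_on A {0..<3}"
    unfolding inj_on_def using Ane Adisj by fastforce
  have U: "\<Union>P = {0..<3 * n}"
  proof
    show "\<Union>P \<subseteq> {0..<3 * n}" by (auto simp: P_def A_def)
    show "{0..<3 * n} \<subseteq> \<Union>P"
    proof
      fix i assume i: "i \<in> {0..<3 * n}"
      have "col i < 3" by (simp add: col_def)
      then show "i \<in> \<Union>P" using i by (auto simp: P_def A_def)
    qed
  qed
  have pa: "partition_on {0..<3 * n} P"
  proof (rule partition_onI)
    show "\<Union>P = {0..<3 * n}" by (rule U)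
    show "disjnt p q" if "p \<in> P" "q \<in> P" "p \<noteq> q" for p q
      using that Adisj unfolding P_def disjnt_def by (metis imageE)
    show "{} \<notin> P" using Ane unfolding P_def by (metis atLeastLessThan_iff imageE)
  qed
  have cardP: "card P = 3" unfolding P_def using card_image[OF Ainj] by simp
  have ind: "independent (Eg E n) B" if BP: "B \<in> P" for B
  proof -
    obtain k where k: "B = A k" using BP by (auto simp: P_def)
    show ?thesis unfolding independent_def k
    proof (intro ballI notI)
      fix i j assume i: "i \<in> A k" and j: "j \<in> A k" and e: "Eg E n i j"
      have ci: "col i = col j" using i j by (simp add: A_def)
      have iv: "i div 3 < n" "j div 3 < n" using e by (auto simp: Eg_def)
      show False
      proof (cases "i div 3 = j div 3 \<and> i \<noteq> j")
        case True
        then have "i mod 3 \<noteq> j mod 3" by (metis div_mult_mod_eq)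
        moreover have "(c (i div 3) + i mod 3) mod 3 = (c (i div 3) + j mod 3) mod 3" using ci True by (simp add: col_def)
        ultimately show False using mod3_cancel[of "i mod 3" "j mod 3" "c (i div 3)"] by simp
      next
        case False
        then have m: "i mod 3 = 0" "j mod 3 = 0" "E (i div 3) (j div 3)" using e by (auto simp: Eg_def)
        have "c (i div 3) \<noteq> c (j div 3)" using c m(3) iv unfolding proper_coloring_def by auto
        then show False using ci m cl[OF iv(1)] cl[OF iv(2)] by (simp add: col_def)
      qed
    qed
  qed
  have colorful: "colorful (Eg E n) P B i" if BP: "B \<in> P" "i \<in> B" for B i
    unfolding colorful_def
  proof (intro ballI impI)
    fix B' assume B': "B' \<in> P" "B' \<noteq> B"
    obtain k where k: "B = A k" "k < 3" using BP(1) unfolding P_def by auto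
    obtain k' where k': "B' = A k'" "k' < 3" using B'(1) unfolding P_def by auto
    have kk: "k \<noteq> k'" using k k' B' by auto
    have i: "i < 3 * n" "col i = k" using BP k by (auto simp: A_def)
    have vn: "i div 3 < n" using i by auto
    define u where "u = 3 * (i div 3) + (k' + 3 - c (i div 3)) mod 3"
    have u: "u \<in> A k'" unfolding u_def by (rule wit[OF vn k'(2)])
    have "u \<noteq> i" using u i kk by (auto simp: A_def)
    moreover have "u div 3 = i div 3" by (simp add: u_def)
    moreover have "u < 3 * n" using u by (simp add: A_def)
    ultimately have "Eg E n i u" using i by (auto simp: Eg_def)
    then show "\<exists>u\<in>B'. Eg E n i u" using u k' by auto
  qed
  have "fall_coloring {0..<3 * n} (Eg E n) 3 P"
    unfolding fall_coloring_def using pa cardP ind colorful by (auto simp: P_def)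
  then show ?thesis unfolding fall_colorable_def by blast
qed



lemma BB_mono: "n \<le> m \<Longrightarrow> BB n L \<le> BB m L"
  unfolding BB_def by (intro add_mono mult_le_mono order.refl) auto

lemma BB_poly: "1 \<le> L \<Longrightarrow> BB L L \<le> 1000 * L ^ 3 + 1000"
proof -
  assume L: "1 \<le> L"
  have a: "L \<le> L * (L * L)" using L by (metis le_square mult_le_mono2 mult_1_right order.trans)
  have b: "L * L \<le> L * (L * L)" using L by simp
  show ?thesis unfolding BB_def power3_eq_cube apply (simp add: algebra_simps) using a b by linarith
qed

lemma BB_bound: "1 \<le> n \<Longrightarrow> BB n (n * n) \<le> 1000 * (n * n) ^ 3 + 1000"
proof -
  assume n: "1 \<le> n"
  have "n \<le> n * n" using n by simp
  then have "BB n (n * n) \<le> BB (n * n) (n * n)" by (rule BB_mono)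
  also have "\<dots> \<le> 1000 * (n * n) ^ 3 + 1000" by (rule BB_poly) (use n in simp)
  finally show ?thesis .
qed



lemma concat_nth_uniform:
  "(\<forall>i<k. length (f i) = n) \<Longrightarrow> v < k \<Longrightarrow> w < n \<Longrightarrow> concat (map f [0..<k]) ! (v * n + w) = f v ! w"
proof (induction k)
  case 0 then show ?case by simp
next
  case (Suc k)
  have len: "length (concat (map f [0..<k])) = k * n"
    using Suc.prems(1) by (induction k) auto
  show ?case
  proof (cases "v < k")
    case True
    have "Suc v * n \<le> k * n" using True by (intro mult_le_mono1) simp
    then have "v * n + w < k * n" using Suc.prems(3) by simp
    then show ?thesis using Suc True len by (simp add: nth_append)
  next
    case False
    then have "v = k" using Suc by simp
    then show ?thesis using len by (simp add: nth_append)
  qed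
qed

lemma enc_len: "length (enc n E) = n * n"
proof -
  have "\<forall>i<k. length (map (E i) [0..<n]) = n" for k by simp
  have "length (concat (map (\<lambda>i. map (E i) [0..<n]) [0..<k])) = k * n" for k
    by (induction k) auto
  then show ?thesis by (simp add: enc_def)
qed

lemma enc_nth: "v < n \<Longrightarrow> w < n \<Longrightarrow> enc n E ! (v * n + w) = E v w"
  unfolding enc_def by (subst concat_nth_uniform) auto

lemma upt3: "[0..<3 * n] = concat (map (\<lambda>v. [3 * v, 3 * v + 1, 3 * v + 2]) [0..<n])"
proof (induction n)
  case 0 then show ?case by simp
next
  case (Suc n)
  have e: "3 * Suc n = 3 * n + 3" by simp
  have "[0..<3 * Suc n] = [0..<3 * n] @ [3 * n..<3 * n + 3]"
    unfolding e by (rule upt_add_eq_append) simp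
  also have "[3 * n..<3 * n + 3] = [3 * n, 3 * n + 1, 3 * n + 2]"
    by (simp add: numeral_3_eq_3 upt_rec)
  finally show ?case using Suc by simp
qed

lemma concat_map_concat3:
  "concat (map h (concat (map (\<lambda>v. [a v, b v, c v]) xs))) = concat (map (\<lambda>v. h (a v) @ h (b v) @ h (c v)) xs)"
  by (induction xs) auto

lemma enc3: "enc (3 * n) F = concat (map (\<lambda>v.
     concat (map (\<lambda>w. [F (3 * v) (3 * w), F (3 * v) (3 * w + 1), F (3 * v) (3 * w + 2)]) [0..<n])
   @ concat (map (\<lambda>w. [F (3 * v + 1) (3 * w), F (3 * v + 1) (3 * w + 1), F (3 * v + 1) (3 * w + 2)]) [0..<n])
   @ concat (map (\<lambda>w. [F (3 * v + 2) (3 * w), F (3 * v + 2) (3 * w + 1), F (3 * v + 2) (3 * w + 2)]) [0..<n])) [0..<n])"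
proof -
  have r: "map (F i) [0..<3 * n] = concat (map (\<lambda>w. [F i (3 * w), F i (3 * w + 1), F i (3 * w + 2)]) [0..<n])" for i
    unfolding upt3 by (induction n) auto
  show ?thesis unfolding enc_def r
    by (subst upt3) (rule concat_map_concat3)
qed

lemma div3_facts[simp]: "Suc (3 * v) div 3 = v" "Suc (Suc (3 * v)) div 3 = v" "\<not> 3 dvd Suc (3 * v)" "\<not> 3 dvd Suc (Suc (3 * v))"
  "3 * v \<noteq> Suc (3 * w)" "3 * v \<noteq> Suc (Suc (3 * w))" "Suc (3 * v) \<noteq> Suc (Suc (3 * w))"
  "Suc (3 * v) \<noteq> 3 * w" "Suc (Suc (3 * v)) \<noteq> 3 * w" "Suc (Suc (3 * v)) \<noteq> Suc (3 * w)"
  by presburger+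

lemma allout_enc:
  assumes g: "graph {0..<n} E"
  shows "allout (enc n E) n n = enc (3 * n) (Eg E n)"
proof -
  have irr: "\<not> E v v" for v using g by (auto simp: graph_def)
  have cell: "cellbits a (w = v) (enc n E ! (v * n + w)) =
     [Eg E n (3 * v + an a) (3 * w), Eg E n (3 * v + an a) (3 * w + 1), Eg E n (3 * v + an a) (3 * w + 2)]"
    if "v < n" "w < n" for v w a
    using that irr[of v] unfolding enc_nth[OF that]
    by (cases a) (auto simp: cellbits_def b0_def b1_def b2_def Eg_def an_def)
  have row: "prow (enc n E) n v a 0 = concat (map (\<lambda>w. [Eg E n (3 * v + an a) (3 * w), Eg E n (3 * v + an a) (3 * w + 1), Eg E n (3 * v + an a) (3 * w + 2)]) [0..<n])"
    if "v < n" for v a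
    unfolding prow_def using cell[OF that] by (intro arg_cong[where f = concat] map_cong) auto
  show ?thesis
    unfolding allout_def enc3
    by (intro arg_cong[where f = concat] map_cong) (auto simp: rowout_def row an_def)
qed



definition K3 :: "nat \<Rightarrow> nat \<Rightarrow> bool" where "K3 i j \<longleftrightarrow> i < 3 \<and> j < 3 \<and> i \<noteq> j"

lemma enc_K3: "enc 3 K3 = kl"
  by (simp add: enc_def kl_def K3_def numeral_3_eq_3 upt_rec)

lemma graph_K3: "graph {0..<3} K3"
  by (auto simp: graph_def K3_def)

lemma fall_K3: "fall_colorable {0..<3} K3 3"
proof -
  define P where "P = {{0::nat}, {1}, {2}}"
  have pa: "partition_on {0..<3} P"
  proof (rule partition_onI)
    show "\<Union>P = {0..<3}" by (auto simp: P_def)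
    show "disjnt p q" if "p \<in> P" "q \<in> P" "p \<noteq> q" for p q using that by (auto simp: P_def disjnt_def)
    show "{} \<notin> P" by (auto simp: P_def)
  qed
  have "fall_coloring {0..<3} K3 3 P"
    unfolding fall_coloring_def using pa
    by (auto simp: P_def independent_def colorful_def K3_def)
  then show ?thesis unfolding fall_colorable_def by blast
qed

lemma col_empty: "colorable {0..<(0::nat)} E 3"
  by (auto simp: colorable_def proper_coloring_def)

theorem lemma1:
  shows "\<exists>M c k. tm_wf M \<and>
    (\<forall>n E. graph {0..<n} E \<longrightarrow>
      (\<exists>n' E' t. graph {0..<n'} E' \<and>
         t \<le> c * length (enc n E) ^ k + c \<and>
         tm_computes_in M (enc n E) (enc n' E') t \<and>
         (colorable {0..<n} E 3 \<longleftrightarrow> fall_colorable {0..<n'} E' 3)))"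
proof -
  have main: "\<forall>n E. graph {0..<n} E \<longrightarrow> (\<exists>n' E' t. graph {0..<n'} E' \<and>
         t \<le> 1000 * length (enc n E) ^ 3 + 1000 \<and>
         tm_computes_in Mch (enc n E) (enc n' E') t \<and>
         (colorable {0..<n} E 3 \<longleftrightarrow> fall_colorable {0..<n'} E' 3))"
  proof (intro allI impI)
  fix n :: nat and E :: "nat \<Rightarrow> nat \<Rightarrow> bool" assume g: "graph {0..<n} E"
  show "\<exists>n' E' t. graph {0..<n'} E' \<and>
         t \<le> 1000 * length (enc n E) ^ 3 + 1000 \<and>
         tm_computes_in Mch (enc n E) (enc n' E') t \<and>
         (colorable {0..<n} E 3 \<longleftrightarrow> fall_colorable {0..<n'} E' 3)"
  proof (cases "n = 0")
    case True
    have e: "enc n E = []" using True by (simp add: enc_def)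
    show ?thesis
      apply (rule exI[of _ 3], rule exI[of _ K3], rule exI[of _ 9])
      using graph_K3 empty_run fall_K3 col_empty True unfolding e enc_K3 by simp
  next
    case False
    then have n1: "1 \<le> n" by simp
    define x where "x = enc n E"
    have lx: "n * n = length x" by (simp add: x_def enc_len)
    have xne: "x \<noteq> []" using lx n1 by (metis le_square length_0_conv not_one_le_zero order.trans)
    obtain t where t: "t \<le> BB n (length x)" "tm_computes_in Mch x (allout x n n) t"
      using computes[OF lx xne] by blast
    have tb: "t \<le> 1000 * length x ^ 3 + 1000"
      using t(1) BB_bound[OF n1] lx by simp
    have eq: "colorable {0..<n} E 3 \<longleftrightarrow> fall_colorable {0..<3 * n} (Eg E n) 3"
    proof
      assume "colorable {0..<n} E 3"
      then obtain c where "proper_coloring {0..<n} E 3 c" by (auto simp: colorable_def)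
      then show "fall_colorable {0..<3 * n} (Eg E n) 3" using col_to_fall g n1 by auto
    next
      assume "fall_colorable {0..<3 * n} (Eg E n) 3"
      then obtain P where "fall_coloring {0..<3 * n} (Eg E n) 3 P" by (auto simp: fall_colorable_def)
      then show "colorable {0..<n} E 3" using fall_to_col g by blast
    qed
    show ?thesis
      apply (rule exI[of _ "3 * n"], rule exI[of _ "Eg E n"], rule exI[of _ t])
      using graph_Eg[OF g] tb t(2) eq allout_enc[OF g] unfolding x_def by simp
  qed
  qed
  show ?thesis
    by (rule exI[of _ Mch], rule exI[of _ 1000], rule exI[of _ 3]) (use wf_Mch main in blast)
qed


end
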